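(* Let $X$ be a Euclidean polyhedral space, $U\subset X$ open, and $\Pi$ a polyhedral complex on $X$ such that $\Pi|_U$ is finite. Then there is a strongly concave piecewise affine function $f$ on $X$ such that $S(\Pi,f)|_U$ is finite and $f$ is strictly concave on $S(\Pi,f)|_U$. In particular, $S(\Pi,f)$ is a subdivision of $\Pi$ that is regular on $U$.
   Context: Polyhedral spaces. Let $X$ be a second countable topological space. A polyhedral structure $\Pi$ on $X$ is a locally finite covering of $X$ by distinct closed subsets $\sigma$ (polyhedra), each with a finite-dimensional vector space $M_\sigma$ of continuous real functions on $\sigma$ such that, with $N_\sigma=\operatorname{Hom}(M_\sigma,\mathbb{R})$, the evaluation map $\phi_\sigma\colon\sigma\to N_\sigma$ is a homeomorphism onto a full-dimensional convex polyhedron of an affine hyperplane of $N_\sigma$ not containing $0$. Faces of $\sigma$ are preimages of faces of $\phi_\sigma(\sigma)$ (including the empty face); every face of a polyhedron is a polyhedron of $\Pi$ with function space the restrictions of $M_\sigma$; any two polyhedra meet in a common face. Each polyhedron thus has an affine structure, dimension, facets, relative interior. $\Pi'$ subdivides $\Pi$ if each polyhedron of $\Pi'$ lies in one of $\Pi$ with affine inclusion; structures are equivalent if they have a common subdivision. A polyhedral space is $X$ with an equivalence class of structures; a polyhedral complex on $X$ is a member of the class. $\tau\prec\sigma$ means $\tau$ is a face of $\sigma$. A Euclidean polyhedral space is a polyhedral space $X$ with a finite-dimensional Euclidean vector space $N_X$ and a map $\iota\colon X\to N_X$ with image in an affine hyperplane $H_X\not\ni0$ such that some polyhedral complex has $\iota$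 injective and affine on each polyhedron; only such complexes are considered. For a nonempty facet $\tau$ of $\sigma$, $v_{\sigma\setminus\tau}$ is the unit vector orthogonal to the affine span of $\iota(\tau)$, parallel to that of $\iota(\sigma)$, pointing towards $\iota(\sigma)$. For $V$ open, $\Pi|_V$ is the set of polyhedra of $\Pi$ meeting $V$, $\Pi|_V(k)$ those of dimension $k$. A $k$-dimensional weight $c\colon\Pi|_V(k)\to\mathbb{R}$ is positive if $c\ge0$, a Minkowski weight if $\sum_{\sigma\in\Pi|_V(k),\sigma\succ\tau}c(\sigma)v_{\sigma\setminus\tau}=0$ for all $\tau\in\Pi|_V(k-1)$; $M^+_k(\Pi|_V)$ denotes positive Minkowski weights. A piecewise affine function on $V$ defined on $\Pi$ is $f\colon V\to\mathbb{R}$ affine on each $\sigma\cap V$, $\sigma\in\Pi|_V$; write $f=f_\sigma\circ\iota$ there with $f_\sigma$ linear; $(f\cdot c)(\tau)=-\sum_{\sigma\in\Pi|_V(k),\sigma\succ\tau}c(\sigma)f_\sigma(v_{\sigma\setminus\tau})$. A piecewise affine $f$ on $X$ is strongly concave if $f=f'\circ\iota$ for some $f'\colon H_X\to\mathbb{R}\cup\{\pm\infty\}$ whose hypograph is convex. Strict concavity and regularity: a piecewise affine $f$ on $U$ is strictly concave on $\Pi|_U$ if it is defined on $\Pi$ and for every integer $k$, every $\tau\in\Pi|_U(k)$, every open $V\subset U$ with $V\cap\tau\ne\emptyset$ and every $c\in M^+_{k+1}(\Pi|_V)$ with $c(\sigma)>0$ for some $\sigma\in\Pi|_V(k+1)$,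 $\sigma\succ\tau$, one has $(f\cdot c)(\tau)>0$. $\Pi$ is regular on $U$ if there is such an $f$. $S(\Pi,f)$: for a piecewise affine $f$ whose restriction to each polyhedron of $\Pi$ is concave, $S(\Pi,f)=\bigcup_{\sigma\in\Pi}\Pi(f|_\sigma)$, where $\Pi(f|_\sigma)$ is the set of subsets $\rho\subset\sigma$ for which some affine function $\ell$ on $\sigma$ satisfies $f=\ell$ on $\rho$ and $f<\ell$ on $\sigma\setminus\rho$. *)

theory Defs
  imports "HOL-Analysis.Analysis"
begin

text \<open>Euclidean polyhedral spaces, modelled through the map iota into the
Euclidean space N_X (type 'v). Polyhedra are subsets of the topological
space X; their affine structure is the one pulled back along iota.\<close>

definition hyperplane_off_origin :: "'v::euclidean_space set \<Rightarrow> bool" where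
  "hyperplane_off_origin H \<longleftrightarrow> (\<exists>a b. a \<noteq> 0 \<and> b \<noteq> 0 \<and> H = {y. a \<bullet> y = b})"

definition pface :: "('a \<Rightarrow> 'v::euclidean_space) \<Rightarrow> 'a set \<Rightarrow> 'a set \<Rightarrow> bool" where
  "pface \<iota> \<tau> \<sigma> \<longleftrightarrow> \<tau> \<subseteq> \<sigma> \<and> (\<iota> ` \<tau>) face_of (\<iota> ` \<sigma>)"

definition pdim :: "('a \<Rightarrow> 'v::euclidean_space) \<Rightarrow> 'a set \<Rightarrow> int" where
  "pdim \<iota> \<sigma> = aff_dim (\<iota> ` \<sigma>)"

definition euclidean_complex ::
  "'a topology \<Rightarrow> ('a \<Rightarrow> 'v::euclidean_space) \<Rightarrow> 'a set set \<Rightarrow> bool" where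
  "euclidean_complex X \<iota> \<P> \<longleftrightarrow>
     \<Union>\<P> = topspace X \<and>
     (\<forall>x\<in>topspace X. \<exists>W. openin X W \<and> x \<in> W \<and> finite {\<sigma>\<in>\<P>. \<sigma> \<inter> W \<noteq> {}}) \<and>
     (\<forall>\<sigma>\<in>\<P>. closedin X \<sigma> \<and> polyhedron (\<iota> ` \<sigma>) \<and> inj_on \<iota> \<sigma> \<and>
          homeomorphic_map (subtopology X \<sigma>) (top_of_set (\<iota> ` \<sigma>)) \<iota>) \<and>
     (\<forall>\<sigma>\<in>\<P>. \<forall>F. F face_of (\<iota> ` \<sigma>) \<longrightarrow> \<sigma> \<inter> \<iota> -` F \<in> \<P>) \<and>
     (\<forall>\<sigma>\<in>\<P>. \<forall>\<tau>\<in>\<P>. pface \<iota> (\<sigma> \<inter> \<tau>) \<sigma> \<and> pface \<iota> (\<sigma> \<inter> \<tau>) \<tau>)"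

definition euclidean_polyhedral_space ::
  "'a topology \<Rightarrow> ('a \<Rightarrow> 'v::euclidean_space) \<Rightarrow> 'v set \<Rightarrow> 'a set set \<Rightarrow> bool" where
  "euclidean_polyhedral_space X \<iota> H \<P> \<longleftrightarrow>
     second_countable X \<and> hyperplane_off_origin H \<and> \<iota> ` topspace X \<subseteq> H \<and>
     euclidean_complex X \<iota> \<P>"

text \<open>Pi' subdivides Pi (affine inclusion is automatic, both structures being pulled back along iota).\<close>
definition subdivides :: "'a set set \<Rightarrow> 'a set set \<Rightarrow> bool" where
  "subdivides \<P>' \<P> \<longleftrightarrow> (\<forall>\<rho>\<in>\<P>'. \<exists>\<sigma>\<in>\<P>. \<rho> \<subseteq> \<sigma>)"

definition equivalent_complexes ::
  "'a topology \<Rightarrow> ('a \<Rightarrow> 'v::euclidean_space) \<Rightarrow> 'a set set \<Rightarrow> 'a set set \<Rightarrow> bool" where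
  "equivalent_complexes X \<iota> \<P> \<P>' \<longleftrightarrow>
     (\<exists>\<P>''. euclidean_complex X \<iota> \<P>'' \<and> subdivides \<P>'' \<P> \<and> subdivides \<P>'' \<P>')"

definition restr :: "'a set set \<Rightarrow> 'a set \<Rightarrow> 'a set set" where
  "restr \<P> V = {\<sigma>\<in>\<P>. \<sigma> \<inter> V \<noteq> {}}"

definition restr_dim :: "('a \<Rightarrow> 'v::euclidean_space) \<Rightarrow> 'a set set \<Rightarrow> 'a set \<Rightarrow> int \<Rightarrow> 'a set set" where
  "restr_dim \<iota> \<P> V k = {\<sigma>\<in>restr \<P> V. pdim \<iota> \<sigma> = k}"

definition direction :: "'v::euclidean_space set \<Rightarrow> 'v set" where
  "direction S = {y - x | x y. x \<in> affine hull S \<and> y \<in> affine hull S}"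

definition vnormal :: "('a \<Rightarrow> 'v::euclidean_space) \<Rightarrow> 'a set \<Rightarrow> 'a set \<Rightarrow> 'v" where
  "vnormal \<iota> \<sigma> \<tau> = (THE v. norm v = 1 \<and> v \<in> direction (\<iota> ` \<sigma>) \<and>
       (\<forall>w\<in>direction (\<iota> ` \<tau>). v \<bullet> w = 0) \<and>
       (\<forall>x\<in>\<iota> ` \<tau>. \<forall>y\<in>\<iota> ` \<sigma>. (y - x) \<bullet> v \<ge> 0))"

definition pos_minkowski_weight ::
  "('a \<Rightarrow> 'v::euclidean_space) \<Rightarrow> 'a set set \<Rightarrow> 'a set \<Rightarrow> int \<Rightarrow> ('a set \<Rightarrow> real) \<Rightarrow> bool" where
  "pos_minkowski_weight \<iota> \<P> V k c \<longleftrightarrow>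
     (\<forall>\<sigma>\<in>restr_dim \<iota> \<P> V k. c \<sigma> \<ge> 0) \<and>
     (\<forall>\<tau>\<in>restr_dim \<iota> \<P> V (k - 1).
        (\<Sum>\<sigma>\<in>{\<sigma>\<in>restr_dim \<iota> \<P> V k. pface \<iota> \<tau> \<sigma>}. c \<sigma> *\<^sub>R vnormal \<iota> \<sigma> \<tau>) = 0)"

definition pw_affine_on ::
  "('a \<Rightarrow> 'v::euclidean_space) \<Rightarrow> 'a set set \<Rightarrow> 'a set \<Rightarrow> ('a \<Rightarrow> real) \<Rightarrow> bool" where
  "pw_affine_on \<iota> \<P> V f \<longleftrightarrow>
     (\<forall>\<sigma>\<in>restr \<P> V. \<exists>g. linear g \<and> (\<forall>x\<in>\<sigma> \<inter> V. f x = g (\<iota> x)))"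

definition lin_part ::
  "('a \<Rightarrow> 'v::euclidean_space) \<Rightarrow> 'a set \<Rightarrow> ('a \<Rightarrow> real) \<Rightarrow> 'a set \<Rightarrow> ('v \<Rightarrow> real)" where
  "lin_part \<iota> V f \<sigma> = (SOME g. linear g \<and> (\<forall>x\<in>\<sigma> \<inter> V. f x = g (\<iota> x)))"

definition wdot ::
  "('a \<Rightarrow> 'v::euclidean_space) \<Rightarrow> 'a set set \<Rightarrow> 'a set \<Rightarrow> ('a \<Rightarrow> real) \<Rightarrow> int \<Rightarrow> ('a set \<Rightarrow> real) \<Rightarrow> 'a set \<Rightarrow> real" where
  "wdot \<iota> \<P> V f k c \<tau> =
     - (\<Sum>\<sigma>\<in>{\<sigma>\<in>restr_dim \<iota> \<P> V k. pface \<iota> \<tau> \<sigma>}. c \<sigma> * lin_part \<iota> V f \<sigma> (vnormal \<iota> \<sigma> \<tau>))"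

definition strictly_concave_on_complex ::
  "'a topology \<Rightarrow> ('a \<Rightarrow> 'v::euclidean_space) \<Rightarrow> 'a set set \<Rightarrow> 'a set \<Rightarrow> ('a \<Rightarrow> real) \<Rightarrow> bool" where
  "strictly_concave_on_complex X \<iota> \<P> U f \<longleftrightarrow>
     pw_affine_on \<iota> \<P> U f \<and>
     (\<forall>k::int. \<forall>\<tau>\<in>restr_dim \<iota> \<P> U k. \<forall>V. openin X V \<and> V \<subseteq> U \<and> V \<inter> \<tau> \<noteq> {} \<longrightarrow>
        (\<forall>c. pos_minkowski_weight \<iota> \<P> V (k + 1) c \<and>
             (\<exists>\<sigma>\<in>restr_dim \<iota> \<P> V (k + 1). pface \<iota> \<tau> \<sigma> \<and> c \<sigma> > 0)
             \<longrightarrow> wdot \<iota> \<P> V f (k + 1) c \<tau> > 0))"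

definition regular_on ::
  "'a topology \<Rightarrow> ('a \<Rightarrow> 'v::euclidean_space) \<Rightarrow> 'a set set \<Rightarrow> 'a set \<Rightarrow> bool" where
  "regular_on X \<iota> \<P> U \<longleftrightarrow> (\<exists>f. strictly_concave_on_complex X \<iota> \<P> U f)"

definition pw_affine_on_space ::
  "'a topology \<Rightarrow> ('a \<Rightarrow> 'v::euclidean_space) \<Rightarrow> 'a set set \<Rightarrow> ('a \<Rightarrow> real) \<Rightarrow> bool" where
  "pw_affine_on_space X \<iota> \<P> f \<longleftrightarrow>
     (\<exists>\<P>'. euclidean_complex X \<iota> \<P>' \<and> equivalent_complexes X \<iota> \<P> \<P>' \<and>
           pw_affine_on \<iota> \<P>' (topspace X) f)"

definition strongly_concave ::
  "'a topology \<Rightarrow> ('a \<Rightarrow> 'v::euclidean_space) \<Rightarrow> 'v set \<Rightarrow> ('a \<Rightarrow> real) \<Rightarrow> bool" where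
  "strongly_concave X \<iota> H f \<longleftrightarrow>
     (\<exists>f'::'v \<Rightarrow> ereal. (\<forall>x\<in>topspace X. ereal (f x) = f' (\<iota> x)) \<and>
        convex {(y, t::real). y \<in> H \<and> ereal t \<le> f' y})"

definition linearity_domains ::
  "('a \<Rightarrow> 'v::euclidean_space) \<Rightarrow> ('a \<Rightarrow> real) \<Rightarrow> 'a set \<Rightarrow> 'a set set" where
  "linearity_domains \<iota> f \<sigma> = {\<rho>. \<rho> \<subseteq> \<sigma> \<and> (\<exists>a b. (\<forall>x\<in>\<rho>. f x = a \<bullet> \<iota> x + b) \<and>
                                          (\<forall>x\<in>\<sigma> - \<rho>. f x < a \<bullet> \<iota> x + b))}"

definition S_complex ::
  "('a \<Rightarrow> 'v::euclidean_space) \<Rightarrow> 'a set set \<Rightarrow> ('a \<Rightarrow> real) \<Rightarrow> 'a set set" where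
  "S_complex \<iota> \<P> f = (\<Union>\<sigma>\<in>\<P>. linearity_domains \<iota> f \<sigma>)"

end

theory Submission
  imports Defs
begin

declare split_paired_All [simp del] split_paired_Ex [simp del]

definition hf :: "'v::euclidean_space \<times> real \<Rightarrow> 'v \<Rightarrow> real" where
  "hf p y = fst p \<bullet> y - snd p"

definition negp :: "'v::euclidean_space \<times> real \<Rightarrow> 'v \<times> real" where
  "negp p = (- fst p, - snd p)"

lemma hf_negp[simp]: "hf (negp p) y = - hf p y"
  by (simp add: hf_def negp_def)

lemma hf_comb: "hf p ((1 - t) *\<^sub>R x + t *\<^sub>R y) = (1 - t) * hf p x + t * hf p y"
  by (simp add: hf_def inner_add_right algebra_simps)

lemma hf_comb2: "u + v = 1 \<Longrightarrow> hf p (u *\<^sub>R x + v *\<^sub>R y) = u * hf p x + v * hf p y"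
  by (simp add: hf_def inner_add_right algebra_simps) (metis distrib_right mult_1)

lemma convex_cons: "convex {y. \<forall>p\<in>D. hf p y \<le> 0}"
  unfolding convex_def
proof (intro ballI allI impI, clarsimp)
  fix x y u v p assume "\<forall>p\<in>D. hf p x \<le> 0" "\<forall>p\<in>D. hf p y \<le> 0" "(0::real) \<le> u" "0 \<le> v" "u + v = 1" "p \<in> D"
  then show "hf p (u *\<^sub>R x + v *\<^sub>R y) \<le> 0"
    by (simp add: hf_comb2 add_nonpos_nonpos mult_nonneg_nonpos)
qed

lemma affine_eqs: "affine {y. \<forall>p\<in>D. hf p y = 0}"
  unfolding affine_def by (auto simp: hf_comb2)

lemma closed_cons: "closed {y. \<forall>p\<in>D. hf p y \<le> 0}"
proof -
  have "{y. \<forall>p\<in>D. hf p y \<le> 0} = (\<Inter>p\<in>D. {y. fst p \<bullet> y \<le> snd p})"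
    by (auto simp: hf_def)
  then show ?thesis by (auto intro!: closed_INT closed_halfspace_le)
qed

lemma face_hyp_subset:
  fixes F :: "'v::euclidean_space set"
  assumes "convex F" "x \<in> rel_interior F" "\<forall>z\<in>F. hf p z \<le> 0" "hf p x = 0"
  shows "\<forall>z\<in>F. hf p z = 0"
proof -
  have "(F \<inter> {y. fst p \<bullet> y = snd p}) face_of F"
    using assms by (intro face_of_Int_supporting_hyperplane_le) (auto simp: hf_def)
  moreover have "(F \<inter> {y. fst p \<bullet> y = snd p}) \<inter> rel_interior F \<noteq> {}"
    using assms rel_interior_subset by (auto simp: hf_def)
  ultimately have "F \<subseteq> F \<inter> {y. fst p \<bullet> y = snd p}"
    using subset_of_face_of[of "F \<inter> {y. fst p \<bullet> y = snd p}" F F] by blast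
  then show ?thesis by (auto simp: hf_def)
qed

lemma GFL:
  fixes A :: "'v::euclidean_space set" and D :: "('v \<times> real) set"
  assumes A: "affine A" and D: "finite D" and Q: "Q = A \<inter> {y. \<forall>p\<in>D. hf p y \<le> 0}"
    and F: "F face_of Q" and Fne: "F \<noteq> {}"
  shows "F = Q \<inter> {y. \<forall>p\<in>D. (\<forall>z\<in>F. hf p z = 0) \<longrightarrow> hf p y = 0}"
proof
  show "F \<subseteq> Q \<inter> {y. \<forall>p\<in>D. (\<forall>z\<in>F. hf p z = 0) \<longrightarrow> hf p y = 0}"
    using face_of_imp_subset[OF F] by auto
next
  define Q' where "Q' = Q \<inter> {y. \<forall>p\<in>D. (\<forall>z\<in>F. hf p z = 0) \<longrightarrow> hf p y = 0}"
  have cF: "convex F" using F face_of_imp_convex by blast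
  obtain x where x: "x \<in> rel_interior F"
    using rel_interior_eq_empty cF Fne by blast
  have xF: "x \<in> F" using x rel_interior_subset by blast
  have FQ: "F \<subseteq> Q" using F face_of_imp_subset by blast
  have strict: "hf p x < 0" if "p \<in> D" "\<not> (\<forall>z\<in>F. hf p z = 0)" for p
  proof -
    have le: "\<forall>z\<in>F. hf p z \<le> 0" using FQ Q that by auto
    then have "hf p x \<le> 0" using xF by auto
    moreover have "hf p x \<noteq> 0"
      using face_hyp_subset[OF cF x le] that by auto
    ultimately show ?thesis by auto
  qed
  define Dn where "Dn = {p\<in>D. \<not> (\<forall>z\<in>F. hf p z = 0)}"
  define Op where "Op = (\<Inter>p\<in>Dn. {y. fst p \<bullet> y < snd p})"
  have "open Op" unfolding Op_def using D Dn_def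
    by (intro open_INT) (auto intro: open_halfspace_lt)
  moreover have "x \<in> Op" using strict unfolding Op_def Dn_def by (auto simp: hf_def)
  ultimately obtain e where e: "e > 0" "ball x e \<subseteq> Op"
    using open_contains_ball by blast
  define E where "E = A \<inter> {y. \<forall>p\<in>{p\<in>D. \<forall>z\<in>F. hf p z = 0}. hf p y = 0}"
  have "affine E" unfolding E_def using A affine_eqs[of "{p\<in>D. \<forall>z\<in>F. hf p z = 0}"] by (intro affine_Int)
  moreover have "Q' \<subseteq> E" unfolding Q'_def E_def Q by auto
  ultimately have affE: "affine hull Q' \<subseteq> E" by (simp add: hull_minimal)
  have "x \<in> rel_interior Q'"
    unfolding mem_rel_interior_ball
  proof (intro conjI exI)
    show "x \<in> Q'" unfolding Q'_def using xF FQ by auto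
    show "e > 0" by fact
    show "ball x e \<inter> affine hull Q' \<subseteq> Q'"
    proof
      fix y assume y: "y \<in> ball x e \<inter> affine hull Q'"
      then have yE: "y \<in> E" using affE by auto
      have yO: "y \<in> Op" using y e by auto
      have "hf p y \<le> 0" if "p \<in> D" for p
      proof (cases "\<forall>z\<in>F. hf p z = 0")
        case True then have "hf p y = 0" using yE that unfolding E_def by blast
        then show ?thesis by simp
      next
        case False then have "p \<in> Dn" using that Dn_def by auto
        then show ?thesis using yO unfolding Op_def by (auto simp: hf_def)
      qed
      then show "y \<in> Q'" using yE unfolding Q'_def Q E_def by auto
    qed
  qed
  moreover have "Q' \<subseteq> Q" unfolding Q'_def by auto
  ultimately have "Q' \<subseteq> F"
    using subset_of_face_of[OF F] xF by blast
  then show "Q \<inter> {y. \<forall>p\<in>D. (\<forall>z\<in>F. hf p z = 0) \<longrightarrow> hf p y = 0} \<subseteq> F"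
    unfolding Q'_def by blast
qed

definition Kc :: "('v::euclidean_space \<times> real) set \<Rightarrow> ('v \<times> real \<Rightarrow> int) \<Rightarrow> 'v set" where
  "Kc J s = {y. \<forall>j\<in>J. (s j = -1 \<longrightarrow> hf j y \<le> 0) \<and> (s j = 1 \<longrightarrow> hf j y \<ge> 0) \<and> (s j = 0 \<longrightarrow> hf j y = 0)}"

definition SV :: "('v::euclidean_space \<times> real) set \<Rightarrow> ('v \<times> real \<Rightarrow> int) set" where
  "SV J = PiE J (\<lambda>_. {-1,0,1})"

definition Jc :: "('v::euclidean_space \<times> real) set \<Rightarrow> ('v \<times> real \<Rightarrow> int) \<Rightarrow> ('v \<times> real) set" where
  "Jc J s = {j\<in>J. s j \<noteq> 1} \<union> negp ` {j\<in>J. s j \<noteq> -1}"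

lemma SV_vals: "s \<in> SV J \<Longrightarrow> j \<in> J \<Longrightarrow> s j = -1 \<or> s j = 0 \<or> s j = 1"
proof -
  assume "s \<in> SV J" "j \<in> J"
  then have "s j \<in> {-1,0,1}" unfolding SV_def by (rule PiE_mem)
  then show ?thesis by auto
qed

lemma finite_SV: "finite J \<Longrightarrow> finite (SV J)"
  unfolding SV_def by (intro finite_PiE) auto

lemma Kc_cons: assumes "s \<in> SV J" shows "Kc J s = {y. \<forall>p\<in>Jc J s. hf p y \<le> 0}"
proof -
  have "y \<in> Kc J s \<longleftrightarrow> (\<forall>p\<in>Jc J s. hf p y \<le> 0)" for y
  proof
    assume "y \<in> Kc J s" then show "\<forall>p\<in>Jc J s. hf p y \<le> 0"
      unfolding Kc_def Jc_def using SV_vals[OF assms] by fastforce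
  next
    assume a: "\<forall>p\<in>Jc J s. hf p y \<le> 0"
    show "y \<in> Kc J s" unfolding Kc_def
    proof (intro CollectI ballI conjI impI)
      fix j assume j: "j \<in> J"
      show "hf j y \<le> 0" if "s j = -1" using a j that unfolding Jc_def by auto
      show "hf j y \<ge> 0" if "s j = 1"
      proof -
        have "negp j \<in> Jc J s" using j that unfolding Jc_def by auto
        then have "hf (negp j) y \<le> 0" using a by blast
        then show ?thesis by simp
      qed
      show "hf j y = 0" if "s j = 0"
      proof -
        have "negp j \<in> Jc J s" "j \<in> Jc J s" using j that unfolding Jc_def by auto
        then have "hf (negp j) y \<le> 0" "hf j y \<le> 0" using a by blast+
        then show ?thesis by simp
      qed
    qed
  qed
  then show ?thesis by auto
qed

lemma finite_Jc: "finite J \<Longrightarrow> finite (Jc J s)"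
  unfolding Jc_def by auto

lemma convex_Kc: "s \<in> SV J \<Longrightarrow> convex (Kc J s)"
  by (simp add: Kc_cons convex_cons)

lemma closed_Kc: "s \<in> SV J \<Longrightarrow> closed (Kc J s)"
  by (simp add: Kc_cons closed_cons)

lemma polyhedron_cons: "finite D \<Longrightarrow> polyhedron {y. \<forall>p\<in>D. hf p y \<le> 0}"
proof -
  assume D: "finite D"
  have "{y. \<forall>p\<in>D. hf p y \<le> 0} = \<Inter>((\<lambda>p. {y. fst p \<bullet> y \<le> snd p}) ` D)"
    by (auto simp: hf_def)
  then show ?thesis using D by (auto intro!: polyhedron_Inter polyhedron_halfspace_le)
qed

lemma polyhedron_Kc: "finite J \<Longrightarrow> s \<in> SV J \<Longrightarrow> polyhedron (Kc J s)"
  by (simp add: Kc_cons polyhedron_cons finite_Jc)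

lemma eq_mem: "A = B \<Longrightarrow> (x \<in> A) = (x \<in> B)" by simp

definition Crep :: "'v::euclidean_space set \<Rightarrow> ('v \<times> real) set" where
  "Crep Q = (SOME C. finite C \<and> Q = affine hull Q \<inter> {y. \<forall>p\<in>C. hf p y \<le> 0})"

lemma Crep:
  fixes Q :: "'v::euclidean_space set"
  assumes "polyhedron Q"
  shows "finite (Crep Q) \<and> Q = affine hull Q \<inter> {y. \<forall>p\<in>Crep Q. hf p y \<le> 0}"
proof -
  obtain F where F: "finite F" "Q = affine hull Q \<inter> \<Inter>F"
    "\<forall>h\<in>F. \<exists>a b. a \<noteq> 0 \<and> h = {x. a \<bullet> x \<le> b}"
  proof -
    have "\<exists>F. finite F \<and> Q = affine hull Q \<inter> \<Inter>F \<and> (\<forall>h\<in>F. \<exists>a b. a \<noteq> 0 \<and> h = {x. a \<bullet> x \<le> b})"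
      using assms by (simp only: polyhedron_Int_affine)
    then show ?thesis using that by blast
  qed
  define g where "g h = (SOME p. h = {x. fst p \<bullet> x \<le> snd p})" for h :: "'v set"
  have g: "h = {x. fst (g h) \<bullet> x \<le> snd (g h)}" if "h \<in> F" for h
  proof -
    have "\<exists>a b. a \<noteq> 0 \<and> h = {x. a \<bullet> x \<le> b}" using F(3) that by (rule bspec)
    then obtain a b where ab: "h = {x. a \<bullet> x \<le> b}" by (elim exE conjE)
    have "h = {x. fst (a,b) \<bullet> x \<le> snd (a,b)}" unfolding fst_conv snd_conv by (rule ab)
    then have "\<exists>p. h = {x. fst p \<bullet> x \<le> snd p}" by (rule exI)
    then show ?thesis unfolding g_def by (rule someI_ex)
  qed
  have E: "\<Inter>F = {y. \<forall>p\<in>g ` F. hf p y \<le> 0}"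
  proof -
    have "y \<in> \<Inter>F \<longleftrightarrow> (\<forall>p\<in>g ` F. hf p y \<le> 0)" for y
    proof -
      have e: "y \<in> h \<longleftrightarrow> fst (g h) \<bullet> y \<le> snd (g h)" if "h \<in> F" for h
      proof -
        have "y \<in> h \<longleftrightarrow> y \<in> {x. fst (g h) \<bullet> x \<le> snd (g h)}" using g[OF that] by (rule eq_mem)
        then show ?thesis by simp
      qed
      have "y \<in> \<Inter>F \<longleftrightarrow> (\<forall>h\<in>F. fst (g h) \<bullet> y \<le> snd (g h))"
        using e by (meson Inter_iff)
      then show ?thesis by (simp add: hf_def)
    qed
    then show ?thesis by auto
  qed
  from F(2) have "Q = affine hull Q \<inter> {y. \<forall>p\<in>g ` F. hf p y \<le> 0}"
    unfolding E .
  then have "\<exists>C. finite C \<and> Q = affine hull Q \<inter> {y. \<forall>p\<in>C. hf p y \<le> 0}"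
    using F(1) by (intro exI[of _ "g ` F"]) (simp only: finite_imageI)
  then show ?thesis unfolding Crep_def by (rule someI_ex)
qed

lemma REPK:
  assumes "polyhedron Q" "s \<in> SV J"
  shows "Q \<inter> Kc J s = affine hull Q \<inter> {y. \<forall>p\<in>Crep Q \<union> Jc J s. hf p y \<le> 0}"
proof -
  have "y \<in> Q \<longleftrightarrow> y \<in> affine hull Q \<inter> {y. \<forall>p\<in>Crep Q. hf p y \<le> 0}" for y
    using Crep[OF assms(1)] by (intro eq_mem) blast
  then show ?thesis using Kc_cons[OF assms(2)] by blast
qed

lemma FaceInt:
  fixes Q :: "'v::euclidean_space set"
  assumes Q: "polyhedron Q" and J: "finite J" and s: "s \<in> SV J" and F: "F face_of (Q \<inter> Kc J s)"
  shows "\<exists>G s'. G face_of Q \<and> s' \<in> SV J \<and> F = G \<inter> Kc J s'"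
proof (cases "F = {}")
  case True then show ?thesis using s by (intro exI[of _ "{}"] exI[of _ s]) auto
next
  case False
  define D where "D = Crep Q \<union> Jc J s"
  have fD: "finite D" unfolding D_def using Crep[OF Q] finite_Jc[OF J] by auto
  have QK: "Q \<inter> Kc J s = affine hull Q \<inter> {y. \<forall>p\<in>D. hf p y \<le> 0}"
    unfolding D_def by (rule REPK[OF Q s])
  have Feq: "F = (Q \<inter> Kc J s) \<inter> {y. \<forall>p\<in>D. (\<forall>z\<in>F. hf p z = 0) \<longrightarrow> hf p y = 0}"
    using GFL[OF affine_affine_hull fD QK F False] .
  define G where "G = Q \<inter> {y. \<forall>p\<in>Crep Q. (\<forall>z\<in>F. hf p z = 0) \<longrightarrow> hf p y = 0}"
  define s' where "s' = restrict (\<lambda>j. if \<forall>z\<in>F. hf j z = 0 then 0 else s j) J"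
  have s': "s' \<in> SV J" using s unfolding s'_def SV_def by (auto simp: PiE_def Pi_def)
  have cQ: "convex Q" using Q polyhedron_imp_convex by blast
  have Qle: "\<forall>y\<in>Q. hf p y \<le> 0" if "p \<in> Crep Q" for p
    using Crep[OF Q] that by blast
  have "G = \<Inter>(insert Q ((\<lambda>p. Q \<inter> {y. fst p \<bullet> y = snd p}) ` {p\<in>Crep Q. \<forall>z\<in>F. hf p z = 0}))"
    unfolding G_def by (auto simp: hf_def)
  moreover have "\<Inter>(insert Q ((\<lambda>p. Q \<inter> {y. fst p \<bullet> y = snd p}) ` {p\<in>Crep Q. \<forall>z\<in>F. hf p z = 0})) face_of Q"
  proof (rule face_of_Inter)
    fix T assume "T \<in> insert Q ((\<lambda>p. Q \<inter> {y. fst p \<bullet> y = snd p}) ` {p\<in>Crep Q. \<forall>z\<in>F. hf p z = 0})"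
    then show "T face_of Q"
    proof
      assume "T = Q" then show ?thesis using cQ face_of_refl by blast
    next
      assume "T \<in> (\<lambda>p. Q \<inter> {y. fst p \<bullet> y = snd p}) ` {p\<in>Crep Q. \<forall>z\<in>F. hf p z = 0}"
      then obtain p where p: "p \<in> Crep Q" "T = Q \<inter> {y. fst p \<bullet> y = snd p}" by auto
      show ?thesis unfolding p(2)
        using Qle[OF p(1)] cQ by (intro face_of_Int_supporting_hyperplane_le) (auto simp: hf_def)
    qed
  qed auto
  ultimately have GQ: "G face_of Q" by simp
  have "F = G \<inter> Kc J s'"
  proof (rule set_eqI, rule iffI)
    fix y assume "y \<in> F"
    then have y: "y \<in> Q" "y \<in> Kc J s" "\<And>p. p \<in> D \<Longrightarrow> (\<forall>z\<in>F. hf p z = 0) \<Longrightarrow> hf p y = 0"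
      using Feq by blast+
    have "y \<in> G" unfolding G_def using y D_def by auto
    moreover have "y \<in> Kc J s'" unfolding Kc_def
    proof (intro CollectI ballI)
      fix j assume j: "j \<in> J"
      show "(s' j = -1 \<longrightarrow> hf j y \<le> 0) \<and> (s' j = 1 \<longrightarrow> hf j y \<ge> 0) \<and> (s' j = 0 \<longrightarrow> hf j y = 0)"
      proof (cases "\<forall>z\<in>F. hf j z = 0")
        case True
        have "hf j y = 0"
        proof (cases "s j = 1")
          case True
          then have "negp j \<in> D" using j unfolding D_def Jc_def by auto
          then show ?thesis using y(3)[of "negp j"] \<open>\<forall>z\<in>F. hf j z = 0\<close> by auto
        next
          case False
          then have "j \<in> D" using j unfolding D_def Jc_def by auto
          then show ?thesis using y(3)[of j] \<open>\<forall>z\<in>F. hf j z = 0\<close> by auto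
        qed
        then show ?thesis by auto
      next
        case False
        then have "s' j = s j" using j unfolding s'_def by auto
        then show ?thesis using y(2) j unfolding Kc_def by auto
      qed
    qed
    ultimately show "y \<in> G \<inter> Kc J s'" by blast
  next
    fix y assume "y \<in> G \<inter> Kc J s'"
    then have y: "y \<in> Q" "\<And>p. p \<in> Crep Q \<Longrightarrow> (\<forall>z\<in>F. hf p z = 0) \<Longrightarrow> hf p y = 0" "y \<in> Kc J s'"
      unfolding G_def by blast+
    have zero: "hf j y = 0" if "j \<in> J" "\<forall>z\<in>F. hf j z = 0" for j
      using y(3) that unfolding Kc_def s'_def by auto
    have yK: "y \<in> Kc J s" unfolding Kc_def
    proof (intro CollectI ballI)
      fix j assume j: "j \<in> J"
      show "(s j = -1 \<longrightarrow> hf j y \<le> 0) \<and> (s j = 1 \<longrightarrow> hf j y \<ge> 0) \<and> (s j = 0 \<longrightarrow> hf j y = 0)"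
      proof (cases "\<forall>z\<in>F. hf j z = 0")
        case True then show ?thesis using zero j by auto
      next
        case False
        then have "s' j = s j" using j unfolding s'_def by auto
        then show ?thesis using y(3) j unfolding Kc_def by auto
      qed
    qed
    have "hf p y = 0" if pD: "p \<in> D" and pt: "\<forall>z\<in>F. hf p z = 0" for p
    proof -
      consider "p \<in> Crep Q" | "p \<in> J" | j where "j \<in> J" "p = negp j"
        using pD unfolding D_def Jc_def by blast
      then show ?thesis
      proof cases
        case 1 then show ?thesis using y(2) pt by auto
      next
        case 2 then show ?thesis using zero pt by auto
      next
        case 3 then show ?thesis using zero[of j] pt by auto
      qed
    qed
    then show "y \<in> F" using Feq y(1) yK by blast
  qed
  then show ?thesis using GQ s' by blast
qed

definition fP :: "('v::euclidean_space \<times> real) set \<Rightarrow> 'v \<Rightarrow> real" where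
  "fP J y = (\<Sum>j\<in>J. min (hf j y) 0)"

lemma min_concave:
  fixes a b t :: real
  assumes "0 \<le> t" "t \<le> 1"
  shows "(1 - t) * min a 0 + t * min b 0 \<le> min ((1 - t) * a + t * b) 0"
proof -
  have "(1 - t) * min a 0 \<le> (1 - t) * a" "t * min b 0 \<le> t * b"
    using assms by (auto intro!: mult_left_mono)
  moreover have "(1 - t) * min a 0 \<le> 0" "t * min b 0 \<le> 0"
    using assms by (auto intro!: mult_nonneg_nonpos)
  ultimately show ?thesis by linarith
qed

lemma fP_concave:
  assumes "0 \<le> t" "t \<le> 1"
  shows "(1 - t) * fP J x + t * fP J y \<le> fP J ((1 - t) *\<^sub>R x + t *\<^sub>R y)"
proof -
  have "(1 - t) * fP J x + t * fP J y = (\<Sum>j\<in>J. (1 - t) * min (hf j x) 0 + t * min (hf j y) 0)"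
    unfolding fP_def by (simp add: sum.distrib sum_distrib_left)
  also have "\<dots> \<le> (\<Sum>j\<in>J. min (hf j ((1 - t) *\<^sub>R x + t *\<^sub>R y)) 0)"
    unfolding hf_comb using assms by (intro sum_mono min_concave)
  finally show ?thesis unfolding fP_def .
qed

lemma sum_hf: "(\<Sum>j\<in>N. hf j y) = (\<Sum>j\<in>N. fst j) \<bullet> y - (\<Sum>j\<in>N. snd j)"
  by (simp add: hf_def sum_subtractf inner_sum_left)

lemma signs_affine:
  fixes R :: "'v::euclidean_space set"
  assumes J: "finite J" and R: "convex R" and eq: "\<forall>y\<in>R. fP J y = a \<bullet> y + b" and j: "j \<in> J"
  shows "(\<forall>y\<in>R. hf j y \<le> 0) \<or> (\<forall>y\<in>R. hf j y \<ge> 0)"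
proof (rule ccontr)
  assume "\<not> ?thesis"
  then obtain y1 y2 where y: "y1 \<in> R" "y2 \<in> R" "hf j y1 > 0" "hf j y2 < 0"
    by (auto simp: not_le)
  define t where "t = hf j y1 / (hf j y1 - hf j y2)"
  have t: "0 < t" "t < 1" using y unfolding t_def by (auto simp: field_simps)
  define z where "z = (1 - t) *\<^sub>R y1 + t *\<^sub>R y2"
  have zR: "z \<in> R" using R y t unfolding z_def convex_alt by auto
  have hz: "hf j z = 0" unfolding z_def hf_comb t_def using y
    by (simp add: field_simps)
  have "(\<Sum>i\<in>J. (1 - t) * min (hf i y1) 0 + t * min (hf i y2) 0) < (\<Sum>i\<in>J. min (hf i z) 0)"
  proof (rule sum_strict_mono_ex1[OF J])
    show "\<forall>i\<in>J. (1 - t) * min (hf i y1) 0 + t * min (hf i y2) 0 \<le> min (hf i z) 0"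
    proof
      fix i assume "i \<in> J"
      show "(1 - t) * min (hf i y1) 0 + t * min (hf i y2) 0 \<le> min (hf i z) 0"
        unfolding z_def hf_comb by (rule min_concave) (use t in auto)
    qed
    show "\<exists>i\<in>J. (1 - t) * min (hf i y1) 0 + t * min (hf i y2) 0 < min (hf i z) 0"
      using j y t hz by (intro bexI[of _ j]) (auto intro!: mult_pos_neg)
  qed
  then have "(1 - t) * fP J y1 + t * fP J y2 < fP J z"
    unfolding fP_def by (simp add: sum.distrib sum_distrib_left)
  moreover have "fP J z = (1 - t) * fP J y1 + t * fP J y2"
    using eq y zR unfolding z_def by (simp add: inner_add_right algebra_simps)
  ultimately show False by simp
qed

definition Nset :: "('v::euclidean_space \<times> real) set \<Rightarrow> 'v set \<Rightarrow> ('v \<times> real) set" where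
  "Nset J R = {j\<in>J. \<exists>y\<in>R. hf j y < 0}"

lemma fP_Nset:
  assumes J: "finite J" and sg: "\<forall>j\<in>J. (\<forall>y\<in>R. hf j y \<le> 0) \<or> (\<forall>y\<in>R. hf j y \<ge> 0)" and y: "y \<in> R"
  shows "fP J y = (\<Sum>j\<in>Nset J R. hf j y)"
proof -
  have "fP J y = (\<Sum>j\<in>J. if j \<in> Nset J R then hf j y else 0)"
    unfolding fP_def
  proof (rule sum.cong[OF refl])
    fix j assume j: "j \<in> J"
    show "min (hf j y) 0 = (if j \<in> Nset J R then hf j y else 0)"
    proof (cases "j \<in> Nset J R")
      case True
      then obtain y' where "y' \<in> R" "hf j y' < 0" unfolding Nset_def by auto
      then have "\<forall>y\<in>R. hf j y \<le> 0" using sg j by force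
      then show ?thesis using True y by auto
    next
      case False
      then have "\<forall>y\<in>R. hf j y \<ge> 0" using j unfolding Nset_def by (auto simp: not_less)
      then show ?thesis using False y by auto
    qed
  qed
  also have "\<dots> = (\<Sum>j\<in>{j\<in>J. \<exists>y'\<in>R. hf j y' < 0}. hf j y)"
    by (subst sum.inter_filter[OF J]) (auto simp: Nset_def intro!: sum.cong)
  also have "\<dots> = (\<Sum>j\<in>Nset J R. hf j y)" by (simp add: Nset_def)
  finally show ?thesis .
qed

lemma Kc_signs:
  assumes "s \<in> SV J" "j \<in> J" "R \<subseteq> Kc J s"
  shows "(\<forall>y\<in>R. hf j y \<le> 0) \<or> (\<forall>y\<in>R. hf j y \<ge> 0)"
  using SV_vals[OF assms(1,2)] assms(2,3) unfolding Kc_def by fastforce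

lemma fP_Kc:
  assumes J: "finite J" and "s \<in> SV J" "y \<in> Kc J s"
  shows "fP J y = (\<Sum>j\<in>{j\<in>J. s j = -1}. hf j y)"
proof -
  have "fP J y = (\<Sum>j\<in>J. if s j = -1 then hf j y else 0)"
    unfolding fP_def
  proof (rule sum.cong[OF refl])
    fix j assume j: "j \<in> J"
    show "min (hf j y) 0 = (if s j = -1 then hf j y else 0)"
      using SV_vals[OF assms(2) j] assms(3) j unfolding Kc_def by auto
  qed
  then show ?thesis by (subst sum.inter_filter[OF J])
qed

definition cf :: "('v \<times> real \<Rightarrow> int) \<Rightarrow> 'v \<times> real \<Rightarrow> real" where
  "cf s j = (if s j = -1 then 1 else if s j = 1 then 0 else 1/2)"

lemma cf_le: "s j = -1 \<or> s j = 0 \<or> s j = 1 \<Longrightarrow> min h 0 \<le> cf s j * h"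
  unfolding cf_def by auto

lemma cf_eq: "s j = -1 \<or> s j = 0 \<or> s j = 1 \<Longrightarrow>
   min h 0 = cf s j * h \<longleftrightarrow> ((s j = -1 \<longrightarrow> h \<le> 0) \<and> (s j = 1 \<longrightarrow> h \<ge> 0) \<and> (s j = 0 \<longrightarrow> h = 0))"
  unfolding cf_def by auto

lemma cell_is_lindom:
  fixes \<iota> :: "'a \<Rightarrow> 'v::euclidean_space"
  assumes J: "finite J" and s: "s \<in> SV J"
  shows "\<sigma> \<inter> \<iota> -` Kc J s \<in> linearity_domains \<iota> (\<lambda>x. fP J (\<iota> x)) \<sigma>"
proof -
  define a where "a = (\<Sum>j\<in>J. cf s j *\<^sub>R fst j)"
  define b where "b = - (\<Sum>j\<in>J. cf s j * snd j)"
  have l: "a \<bullet> y + b = (\<Sum>j\<in>J. cf s j * hf j y)" for y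
    unfolding a_def b_def hf_def by (simp add: inner_sum_left sum_subtractf algebra_simps)
  have vals: "\<And>j. j \<in> J \<Longrightarrow> s j = -1 \<or> s j = 0 \<or> s j = 1" using SV_vals[OF s] by blast
  have "(\<forall>x\<in>\<sigma> \<inter> \<iota> -` Kc J s. fP J (\<iota> x) = a \<bullet> \<iota> x + b) \<and>
        (\<forall>x\<in>\<sigma> - \<sigma> \<inter> \<iota> -` Kc J s. fP J (\<iota> x) < a \<bullet> \<iota> x + b)"
  proof (intro conjI ballI)
    fix x assume x: "x \<in> \<sigma> \<inter> \<iota> -` Kc J s"
    show "fP J (\<iota> x) = a \<bullet> \<iota> x + b" unfolding l fP_def
    proof (rule sum.cong[OF refl])
      fix j assume j: "j \<in> J"
      show "min (hf j (\<iota> x)) 0 = cf s j * hf j (\<iota> x)"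
        using cf_eq[of s j, OF vals[OF j]] x j unfolding Kc_def by auto
    qed
  next
    fix x assume x: "x \<in> \<sigma> - \<sigma> \<inter> \<iota> -` Kc J s"
    then have "\<iota> x \<notin> Kc J s" by auto
    then obtain j where j: "j \<in> J" "\<not> ((s j = -1 \<longrightarrow> hf j (\<iota> x) \<le> 0) \<and> (s j = 1 \<longrightarrow> hf j (\<iota> x) \<ge> 0) \<and> (s j = 0 \<longrightarrow> hf j (\<iota> x) = 0))"
      unfolding Kc_def by blast
    show "fP J (\<iota> x) < a \<bullet> \<iota> x + b" unfolding l fP_def
    proof (rule sum_strict_mono_ex1[OF J])
      show "\<forall>j\<in>J. min (hf j (\<iota> x)) 0 \<le> cf s j * hf j (\<iota> x)"
        using cf_le vals by blast
      have "min (hf j (\<iota> x)) 0 \<noteq> cf s j * hf j (\<iota> x)"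
        using cf_eq[of s j, OF vals[OF j(1)]] j(2) by blast
      then show "\<exists>j\<in>J. min (hf j (\<iota> x)) 0 < cf s j * hf j (\<iota> x)"
        using cf_le[of s j "hf j (\<iota> x)", OF vals[OF j(1)]] j(1) by (intro bexI[of _ j]) auto
    qed
  qed
  then show ?thesis unfolding linearity_domains_def by blast
qed

lemma lindom_is_cell:
  fixes \<iota> :: "'a \<Rightarrow> 'v::euclidean_space"
  assumes J: "finite J" and poly: "polyhedron (\<iota> ` \<sigma>)"
    and rho: "\<rho> \<in> linearity_domains \<iota> (\<lambda>x. fP J (\<iota> x)) \<sigma>"
  shows "\<exists>G s'. G face_of (\<iota> ` \<sigma>) \<and> s' \<in> SV J \<and> \<rho> = (\<sigma> \<inter> \<iota> -` G) \<inter> \<iota> -` Kc J s'"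
proof -
  obtain a b where rs: "\<rho> \<subseteq> \<sigma>" and eq: "\<forall>x\<in>\<rho>. fP J (\<iota> x) = a \<bullet> \<iota> x + b"
    and lt: "\<forall>x\<in>\<sigma> - \<rho>. fP J (\<iota> x) < a \<bullet> \<iota> x + b"
    using rho unfolding linearity_domains_def by blast
  define Qs where "Qs = \<iota> ` \<sigma>"
  have cQ: "convex Qs" unfolding Qs_def using poly polyhedron_imp_convex by blast
  have le: "fP J y \<le> a \<bullet> y + b" if yQ: "y \<in> Qs" for y
  proof -
    obtain x where "x \<in> \<sigma>" "y = \<iota> x" using yQ unfolding Qs_def by auto
    then show ?thesis using eq lt by (cases "x \<in> \<rho>") force+
  qed
  define R where "R = Qs \<inter> {y. a \<bullet> y + b \<le> fP J y}"
  have rhoR: "\<rho> = \<sigma> \<inter> \<iota> -` R"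
  proof (rule set_eqI, rule iffI)
    fix x assume "x \<in> \<rho>" then show "x \<in> \<sigma> \<inter> \<iota> -` R"
      using rs eq unfolding R_def Qs_def by auto
  next
    fix x assume x: "x \<in> \<sigma> \<inter> \<iota> -` R"
    show "x \<in> \<rho>"
    proof (rule ccontr)
      assume "x \<notin> \<rho>"
      then have "fP J (\<iota> x) < a \<bullet> \<iota> x + b" using lt x by auto
      then show False using x unfolding R_def by auto
    qed
  qed
  have Req: "\<forall>y\<in>R. fP J y = a \<bullet> y + b" using le unfolding R_def by force
  have cR: "convex R" unfolding convex_alt
  proof (intro ballI allI impI)
    fix y1 y2 and u :: real assume y: "y1 \<in> R" "y2 \<in> R" and u: "0 \<le> u \<and> u \<le> 1"
    have "(1 - u) *\<^sub>R y1 + u *\<^sub>R y2 \<in> Qs" using cQ y u unfolding R_def convex_alt by auto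
    moreover have "a \<bullet> ((1 - u) *\<^sub>R y1 + u *\<^sub>R y2) + b = (1 - u) * (a \<bullet> y1 + b) + u * (a \<bullet> y2 + b)"
      by (simp add: inner_add_right algebra_simps)
    moreover have "(1 - u) * fP J y1 + u * fP J y2 \<le> fP J ((1 - u) *\<^sub>R y1 + u *\<^sub>R y2)"
      by (rule fP_concave) (use u in auto)
    moreover have "fP J y1 = a \<bullet> y1 + b" "fP J y2 = a \<bullet> y2 + b" using Req y by blast+
    ultimately show "(1 - u) *\<^sub>R y1 + u *\<^sub>R y2 \<in> R" unfolding R_def by simp
  qed
  have sg: "\<forall>j\<in>J. (\<forall>y\<in>R. hf j y \<le> 0) \<or> (\<forall>y\<in>R. hf j y \<ge> 0)"
    using signs_affine[OF J cR Req] by blast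
  define s where "s = restrict (\<lambda>j. if \<forall>y\<in>R. hf j y = 0 then (0::int) else if \<forall>y\<in>R. hf j y \<le> 0 then -1 else 1) J"
  have s: "s \<in> SV J" unfolding s_def SV_def by auto
  have RK: "R \<subseteq> Kc J s"
  proof
    fix y assume y: "y \<in> R"
    show "y \<in> Kc J s" unfolding Kc_def
    proof (intro CollectI ballI)
      fix j assume j: "j \<in> J"
      show "(s j = -1 \<longrightarrow> hf j y \<le> 0) \<and> (s j = 1 \<longrightarrow> hf j y \<ge> 0) \<and> (s j = 0 \<longrightarrow> hf j y = 0)"
        using sg j y unfolding s_def by auto
    qed
  qed
  define N where "N = {j\<in>J. s j = -1}"
  define a' where "a' = (\<Sum>j\<in>N. fst j)"
  define b' where "b' = (\<Sum>j\<in>N. snd j)"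
  have fK: "fP J y = a' \<bullet> y - b'" if "y \<in> Kc J s" for y
    using fP_Kc[OF J s that] unfolding a'_def b'_def N_def sum_hf .
  have Rface: "R = (Qs \<inter> Kc J s) \<inter> {y. (a - a') \<bullet> y = - (b + b')}"
  proof (rule set_eqI, rule iffI)
    fix y assume y: "y \<in> R"
    have yK: "y \<in> Kc J s" using RK y by blast
    with y have "fP J y = a' \<bullet> y - b'" "fP J y = a \<bullet> y + b" using fK[OF yK] Req by blast+
    then show "y \<in> (Qs \<inter> Kc J s) \<inter> {y. (a - a') \<bullet> y = - (b + b')}"
      using y RK unfolding R_def by (auto simp: inner_diff_left)
  next
    fix y assume y: "y \<in> (Qs \<inter> Kc J s) \<inter> {y. (a - a') \<bullet> y = - (b + b')}"
    then have "fP J y = a' \<bullet> y - b'" using fK by auto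
    then show "y \<in> R" using y unfolding R_def by (auto simp: inner_diff_left)
  qed
  have "R face_of (Qs \<inter> Kc J s)"
    unfolding Rface
  proof (rule face_of_Int_supporting_hyperplane_ge)
    show "convex (Qs \<inter> Kc J s)" using cQ convex_Kc[OF s] by (rule convex_Int)
    fix y assume "y \<in> Qs \<inter> Kc J s"
    then have "fP J y = a' \<bullet> y - b'" "fP J y \<le> a \<bullet> y + b" using fK le by blast+
    then show "(a - a') \<bullet> y \<ge> - (b + b')" by (auto simp: inner_diff_left)
  qed
  then obtain G s' where G: "G face_of Qs" "s' \<in> SV J" "R = G \<inter> Kc J s'"
    using FaceInt[OF poly[folded Qs_def] J s] by blast
  have "\<rho> = (\<sigma> \<inter> \<iota> -` G) \<inter> \<iota> -` Kc J s'" unfolding rhoR G(3) by auto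
  then show ?thesis using G unfolding Qs_def by blast
qed

definition cells :: "('a \<Rightarrow> 'v::euclidean_space) \<Rightarrow> 'a set set \<Rightarrow> ('v \<times> real) set \<Rightarrow> 'a set set" where
  "cells \<iota> P J = {\<sigma> \<inter> \<iota> -` Kc J s | \<sigma> s. \<sigma> \<in> P \<and> s \<in> SV J}"

lemma image_Int_vimage: "f ` (A \<inter> f -` B) = f ` A \<inter> B"
  by auto

lemma EC_facts:
  assumes "euclidean_complex X \<iota> P"
  shows EC_union: "\<Union>P = topspace X"
    and EC_lf: "\<forall>x\<in>topspace X. \<exists>W. openin X W \<and> x \<in> W \<and> finite {\<sigma>\<in>P. \<sigma> \<inter> W \<noteq> {}}"
    and EC_closed: "\<And>\<sigma>. \<sigma> \<in> P \<Longrightarrow> closedin X \<sigma>"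
    and EC_poly: "\<And>\<sigma>. \<sigma> \<in> P \<Longrightarrow> polyhedron (\<iota> ` \<sigma>)"
    and EC_inj: "\<And>\<sigma>. \<sigma> \<in> P \<Longrightarrow> inj_on \<iota> \<sigma>"
    and EC_hom: "\<And>\<sigma>. \<sigma> \<in> P \<Longrightarrow> homeomorphic_map (subtopology X \<sigma>) (top_of_set (\<iota> ` \<sigma>)) \<iota>"
    and EC_face: "\<And>\<sigma> F. \<sigma> \<in> P \<Longrightarrow> F face_of (\<iota> ` \<sigma>) \<Longrightarrow> \<sigma> \<inter> \<iota> -` F \<in> P"
    and EC_pface1: "\<And>\<sigma> \<tau>. \<sigma> \<in> P \<Longrightarrow> \<tau> \<in> P \<Longrightarrow> pface \<iota> (\<sigma> \<inter> \<tau>) \<sigma>"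
    and EC_pface2: "\<And>\<sigma> \<tau>. \<sigma> \<in> P \<Longrightarrow> \<tau> \<in> P \<Longrightarrow> pface \<iota> (\<sigma> \<inter> \<tau>) \<tau>"
  using assms unfolding euclidean_complex_def by blast+

lemma S_eq_cells:
  fixes \<iota> :: "'a \<Rightarrow> 'v::euclidean_space"
  assumes EC: "euclidean_complex X \<iota> P" and J: "finite J"
  shows "S_complex \<iota> P (\<lambda>x. fP J (\<iota> x)) = cells \<iota> P J"
proof (rule set_eqI, rule iffI)
  fix \<rho> assume "\<rho> \<in> S_complex \<iota> P (\<lambda>x. fP J (\<iota> x))"
  then obtain \<sigma> where \<sigma>: "\<sigma> \<in> P" "\<rho> \<in> linearity_domains \<iota> (\<lambda>x. fP J (\<iota> x)) \<sigma>"
    unfolding S_complex_def by blast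
  obtain G s' where G: "G face_of (\<iota> ` \<sigma>)" "s' \<in> SV J" "\<rho> = (\<sigma> \<inter> \<iota> -` G) \<inter> \<iota> -` Kc J s'"
    using lindom_is_cell[OF J EC_poly[OF EC \<sigma>(1)] \<sigma>(2)] by blast
  have "\<sigma> \<inter> \<iota> -` G \<in> P" using EC_face[OF EC \<sigma>(1) G(1)] .
  then show "\<rho> \<in> cells \<iota> P J" unfolding cells_def using G by blast
next
  fix \<rho> assume "\<rho> \<in> cells \<iota> P J"
  then obtain \<sigma> s where "\<sigma> \<in> P" "s \<in> SV J" "\<rho> = \<sigma> \<inter> \<iota> -` Kc J s" unfolding cells_def by blast
  then show "\<rho> \<in> S_complex \<iota> P (\<lambda>x. fP J (\<iota> x))"
    unfolding S_complex_def using cell_is_lindom[OF J] by blast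
qed

lemma Kc_Int_face:
  assumes J: "finite J" and s1: "s1 \<in> SV J" and s2: "s2 \<in> SV J"
  shows "(Kc J s1 \<inter> Kc J s2) face_of Kc J s1"
proof -
  define Dd where "Dd = {j\<in>J. s1 j \<noteq> s2 j}"
  have eq: "Kc J s1 \<inter> Kc J s2 = \<Inter>(insert (Kc J s1) ((\<lambda>j. Kc J s1 \<inter> {y. fst j \<bullet> y = snd j}) ` Dd))"
  proof (rule set_eqI, rule iffI)
    fix y assume y: "y \<in> Kc J s1 \<inter> Kc J s2"
    have "hf j y = 0" if "j \<in> Dd" for j
    proof -
      have j: "j \<in> J" "s1 j \<noteq> s2 j" using that Dd_def by auto
      have a: "(s1 j = -1 \<longrightarrow> hf j y \<le> 0) \<and> (s1 j = 1 \<longrightarrow> hf j y \<ge> 0) \<and> (s1 j = 0 \<longrightarrow> hf j y = 0)"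
        using y j(1) unfolding Kc_def by blast
      have b: "(s2 j = -1 \<longrightarrow> hf j y \<le> 0) \<and> (s2 j = 1 \<longrightarrow> hf j y \<ge> 0) \<and> (s2 j = 0 \<longrightarrow> hf j y = 0)"
        using y j(1) unfolding Kc_def by blast
      show ?thesis using SV_vals[OF s1 j(1)] SV_vals[OF s2 j(1)] j(2) a b by auto
    qed
    then show "y \<in> \<Inter>(insert (Kc J s1) ((\<lambda>j. Kc J s1 \<inter> {y. fst j \<bullet> y = snd j}) ` Dd))"
      using y by (auto simp: hf_def)
  next
    fix y assume y: "y \<in> \<Inter>(insert (Kc J s1) ((\<lambda>j. Kc J s1 \<inter> {y. fst j \<bullet> y = snd j}) ` Dd))"
    have y1: "y \<in> Kc J s1" using y by blast
    have z: "hf j y = 0" if "j \<in> Dd" for j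
    proof -
      have "y \<in> Kc J s1 \<inter> {y. fst j \<bullet> y = snd j}" using y that by blast
      then show ?thesis by (simp add: hf_def)
    qed
    have "y \<in> Kc J s2" unfolding Kc_def
    proof (intro CollectI ballI)
      fix j assume j: "j \<in> J"
      show "(s2 j = -1 \<longrightarrow> hf j y \<le> 0) \<and> (s2 j = 1 \<longrightarrow> hf j y \<ge> 0) \<and> (s2 j = 0 \<longrightarrow> hf j y = 0)"
      proof (cases "j \<in> Dd")
        case True then show ?thesis using z by auto
      next
        case False then have "s2 j = s1 j" using j Dd_def by auto
        then show ?thesis using y1 j unfolding Kc_def by auto
      qed
    qed
    then show "y \<in> Kc J s1 \<inter> Kc J s2" using y1 by blast
  qed
  have cK: "convex (Kc J s1)" using convex_Kc[OF s1] .
  show ?thesis unfolding eq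
  proof (rule face_of_Inter)
    fix T assume "T \<in> insert (Kc J s1) ((\<lambda>j. Kc J s1 \<inter> {y. fst j \<bullet> y = snd j}) ` Dd)"
    then show "T face_of Kc J s1"
    proof
      assume "T = Kc J s1" then show ?thesis using cK face_of_refl by blast
    next
      assume "T \<in> (\<lambda>j. Kc J s1 \<inter> {y. fst j \<bullet> y = snd j}) ` Dd"
      then obtain j where j: "j \<in> Dd" "T = Kc J s1 \<inter> {y. fst j \<bullet> y = snd j}" by blast
      have jJ: "j \<in> J" using j Dd_def by auto
      consider "s1 j = -1" | "s1 j = 0" | "s1 j = 1" using SV_vals[OF s1 jJ] by blast
      then show ?thesis
      proof cases
        case 1
        then have "\<And>y. y \<in> Kc J s1 \<Longrightarrow> fst j \<bullet> y \<le> snd j" using jJ unfolding Kc_def hf_def by auto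
        then show ?thesis unfolding j(2) using cK by (rule face_of_Int_supporting_hyperplane_le[rotated])
      next
        case 2
        then have "T = Kc J s1" unfolding j(2) using jJ unfolding Kc_def hf_def by auto
        then show ?thesis using cK face_of_refl by blast
      next
        case 3
        then have "\<And>y. y \<in> Kc J s1 \<Longrightarrow> fst j \<bullet> y \<ge> snd j" using jJ unfolding Kc_def hf_def by auto
        then show ?thesis unfolding j(2) using cK by (rule face_of_Int_supporting_hyperplane_ge[rotated])
      qed
    qed
  qed auto
qed

definition sgnv :: "('v::euclidean_space \<times> real) set \<Rightarrow> 'v \<Rightarrow> ('v \<times> real \<Rightarrow> int)" where
  "sgnv J y = restrict (\<lambda>j. if hf j y < 0 then -1 else if hf j y > 0 then 1 else 0) J"

lemma sgnv: "sgnv J y \<in> SV J" "y \<in> Kc J (sgnv J y)"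
  unfolding sgnv_def SV_def Kc_def by auto

lemma cell_props:
  fixes \<iota> :: "'a \<Rightarrow> 'v::euclidean_space"
  assumes EC: "euclidean_complex X \<iota> P" and J: "finite J" and \<sigma>: "\<sigma> \<in> P" and s: "s \<in> SV J"
  defines "\<rho> \<equiv> \<sigma> \<inter> \<iota> -` Kc J s"
  shows "closedin X \<rho> \<and> polyhedron (\<iota> ` \<rho>) \<and> inj_on \<iota> \<rho> \<and>
         homeomorphic_map (subtopology X \<rho>) (top_of_set (\<iota> ` \<rho>)) \<iota>"
proof (intro conjI)
  have st: "\<sigma> \<subseteq> topspace X" using EC_union[OF EC] \<sigma> by blast
  have hom: "homeomorphic_map (subtopology X \<sigma>) (top_of_set (\<iota> ` \<sigma>)) \<iota>" using EC_hom[OF EC \<sigma>] .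
  have tsp: "topspace (subtopology X \<sigma>) = \<sigma>" using st by auto
  have "closedin (top_of_set (\<iota> ` \<sigma>)) (\<iota> ` \<sigma> \<inter> Kc J s)"
    using closed_Kc[OF s] by (rule closedin_closed_Int)
  then have "closedin (subtopology X \<sigma>) {x \<in> topspace (subtopology X \<sigma>). \<iota> x \<in> \<iota> ` \<sigma> \<inter> Kc J s}"
    using homeomorphic_imp_continuous_map[OF hom] closedin_continuous_map_preimage by blast
  moreover have "{x \<in> topspace (subtopology X \<sigma>). \<iota> x \<in> \<iota> ` \<sigma> \<inter> Kc J s} = \<rho>"
    unfolding tsp \<rho>_def by auto
  ultimately show "closedin X \<rho>" using closedin_trans_full EC_closed[OF EC \<sigma>] by metis
  show "polyhedron (\<iota> ` \<rho>)" unfolding \<rho>_def image_Int_vimage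
    using EC_poly[OF EC \<sigma>] polyhedron_Kc[OF J s] by (rule polyhedron_Int)
  show "inj_on \<iota> \<rho>" using EC_inj[OF EC \<sigma>] unfolding \<rho>_def by (rule inj_on_subset) auto
  have "\<iota> ` (topspace (subtopology X \<sigma>) \<inter> \<rho>) = topspace (top_of_set (\<iota> ` \<sigma>)) \<inter> \<iota> ` \<rho>"
    unfolding tsp \<rho>_def by auto
  from homeomorphic_map_subtopologies[OF hom this]
  have "homeomorphic_map (subtopology X (\<sigma> \<inter> \<rho>)) (top_of_set (\<iota> ` \<sigma> \<inter> \<iota> ` \<rho>)) \<iota>"
    by (simp add: subtopology_subtopology)
  moreover have "\<sigma> \<inter> \<rho> = \<rho>" "\<iota> ` \<sigma> \<inter> \<iota> ` \<rho> = \<iota> ` \<rho>" unfolding \<rho>_def by auto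
  ultimately show "homeomorphic_map (subtopology X \<rho>) (top_of_set (\<iota> ` \<rho>)) \<iota>" by simp
qed

lemma EC_cells:
  fixes \<iota> :: "'a \<Rightarrow> 'v::euclidean_space"
  assumes EC: "euclidean_complex X \<iota> P" and J: "finite J"
  shows "euclidean_complex X \<iota> (cells \<iota> P J)"
  unfolding euclidean_complex_def
proof (intro conjI)
  show "\<Union>(cells \<iota> P J) = topspace X"
  proof
    show "\<Union>(cells \<iota> P J) \<subseteq> topspace X" using EC_union[OF EC] unfolding cells_def by blast
    show "topspace X \<subseteq> \<Union>(cells \<iota> P J)"
    proof
      fix x assume "x \<in> topspace X"
      then obtain \<sigma> where "\<sigma> \<in> P" "x \<in> \<sigma>" using EC_union[OF EC] by blast
      then have "x \<in> \<sigma> \<inter> \<iota> -` Kc J (sgnv J (\<iota> x))" "\<sigma> \<inter> \<iota> -` Kc J (sgnv J (\<iota> x)) \<in> cells \<iota> P J"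
        using sgnv unfolding cells_def by blast+
      then show "x \<in> \<Union>(cells \<iota> P J)" by blast
    qed
  qed
next
  show "\<forall>x\<in>topspace X. \<exists>W. openin X W \<and> x \<in> W \<and> finite {\<rho>\<in>cells \<iota> P J. \<rho> \<inter> W \<noteq> {}}"
  proof
  fix x assume "x \<in> topspace X"
  then obtain W where W: "openin X W" "x \<in> W" "finite {\<sigma>\<in>P. \<sigma> \<inter> W \<noteq> {}}"
    using EC_lf[OF EC] by blast
  have "{\<rho>\<in>cells \<iota> P J. \<rho> \<inter> W \<noteq> {}} \<subseteq> (\<lambda>(\<sigma>, s). \<sigma> \<inter> \<iota> -` Kc J s) ` ({\<sigma>\<in>P. \<sigma> \<inter> W \<noteq> {}} \<times> SV J)"
    unfolding cells_def by fastforce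
  moreover have "finite ((\<lambda>(\<sigma>, s). \<sigma> \<inter> \<iota> -` Kc J s) ` ({\<sigma>\<in>P. \<sigma> \<inter> W \<noteq> {}} \<times> SV J))"
    using W(3) finite_SV[OF J] by blast
  ultimately show "\<exists>W. openin X W \<and> x \<in> W \<and> finite {\<rho>\<in>cells \<iota> P J. \<rho> \<inter> W \<noteq> {}}"
    using W by (meson finite_subset)
  qed
next
  show "\<forall>\<rho>\<in>cells \<iota> P J. closedin X \<rho> \<and> polyhedron (\<iota> ` \<rho>) \<and> inj_on \<iota> \<rho> \<and>
         homeomorphic_map (subtopology X \<rho>) (top_of_set (\<iota> ` \<rho>)) \<iota>"
  proof
  fix \<rho> assume "\<rho> \<in> cells \<iota> P J"
  then obtain \<sigma> s where \<sigma>: "\<sigma> \<in> P" "s \<in> SV J" "\<rho> = \<sigma> \<inter> \<iota> -` Kc J s" unfolding cells_def by blast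
  show "closedin X \<rho> \<and> polyhedron (\<iota> ` \<rho>) \<and> inj_on \<iota> \<rho> \<and>
         homeomorphic_map (subtopology X \<rho>) (top_of_set (\<iota> ` \<rho>)) \<iota>"
    unfolding \<sigma>(3) by (rule cell_props[OF EC J \<sigma>(1,2)])
  qed
next
  show "\<forall>\<rho>\<in>cells \<iota> P J. \<forall>F. F face_of \<iota> ` \<rho> \<longrightarrow> \<rho> \<inter> \<iota> -` F \<in> cells \<iota> P J"
  proof (intro ballI allI impI)
  fix \<rho> F assume \<rho>: "\<rho> \<in> cells \<iota> P J" and F: "F face_of \<iota> ` \<rho>"
  then obtain \<sigma> s where \<sigma>: "\<sigma> \<in> P" "s \<in> SV J" "\<rho> = \<sigma> \<inter> \<iota> -` Kc J s" unfolding cells_def by blast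
  have "F face_of (\<iota> ` \<sigma> \<inter> Kc J s)" using F unfolding \<sigma>(3) image_Int_vimage .
  then obtain G s' where G: "G face_of \<iota> ` \<sigma>" "s' \<in> SV J" "F = G \<inter> Kc J s'"
    using FaceInt[OF EC_poly[OF EC \<sigma>(1)] J \<sigma>(2)] by blast
  have "\<sigma> \<inter> \<iota> -` G \<in> P" using EC_face[OF EC \<sigma>(1) G(1)] .
  moreover have "F \<subseteq> Kc J s" using face_of_imp_subset[OF F] \<sigma>(3) by auto
  then have "\<rho> \<inter> \<iota> -` F = (\<sigma> \<inter> \<iota> -` G) \<inter> \<iota> -` Kc J s'"
    unfolding \<sigma>(3) G(3) by auto
  ultimately show "\<rho> \<inter> \<iota> -` F \<in> cells \<iota> P J" unfolding cells_def using G(2) by blast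
  qed
next
  have key: "pface \<iota> (\<rho>1 \<inter> \<rho>2) \<rho>1"
    if "\<sigma>1 \<in> P" "\<sigma>2 \<in> P" "s1 \<in> SV J" "s2 \<in> SV J" "\<rho>1 = \<sigma>1 \<inter> \<iota> -` Kc J s1" "\<rho>2 = \<sigma>2 \<inter> \<iota> -` Kc J s2"
    for \<sigma>1 \<sigma>2 s1 s2 \<rho>1 \<rho>2
  proof -
    have "pface \<iota> (\<sigma>1 \<inter> \<sigma>2) \<sigma>1" using EC_pface1[OF EC that(1,2)] .
    then have f1: "\<iota> ` (\<sigma>1 \<inter> \<sigma>2) face_of \<iota> ` \<sigma>1" unfolding pface_def by blast
    have "(\<iota> ` (\<sigma>1 \<inter> \<sigma>2) \<inter> (Kc J s1 \<inter> Kc J s2)) face_of (\<iota> ` \<sigma>1 \<inter> Kc J s1)"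
      using f1 Kc_Int_face[OF J that(3,4)] by (rule face_of_Int_Int)
    moreover have "\<iota> ` (\<rho>1 \<inter> \<rho>2) = \<iota> ` (\<sigma>1 \<inter> \<sigma>2) \<inter> (Kc J s1 \<inter> Kc J s2)"
      unfolding that(5,6) by auto
    moreover have "\<iota> ` \<rho>1 = \<iota> ` \<sigma>1 \<inter> Kc J s1" unfolding that(5) by auto
    ultimately show ?thesis unfolding pface_def by auto
  qed
  show "\<forall>\<rho>1\<in>cells \<iota> P J. \<forall>\<rho>2\<in>cells \<iota> P J. pface \<iota> (\<rho>1 \<inter> \<rho>2) \<rho>1 \<and> pface \<iota> (\<rho>1 \<inter> \<rho>2) \<rho>2"
  proof (intro ballI conjI)
  fix \<rho>1 \<rho>2 assume r1: "\<rho>1 \<in> cells \<iota> P J" and r2: "\<rho>2 \<in> cells \<iota> P J"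
  obtain \<sigma>1 s1 where a1: "\<sigma>1 \<in> P" "s1 \<in> SV J" "\<rho>1 = \<sigma>1 \<inter> \<iota> -` Kc J s1" using r1 unfolding cells_def by blast
  obtain \<sigma>2 s2 where a2: "\<sigma>2 \<in> P" "s2 \<in> SV J" "\<rho>2 = \<sigma>2 \<inter> \<iota> -` Kc J s2" using r2 unfolding cells_def by blast
  show "pface \<iota> (\<rho>1 \<inter> \<rho>2) \<rho>1" using key[OF a1(1) a2(1) a1(2) a2(2) a1(3) a2(3)] .
  show "pface \<iota> (\<rho>1 \<inter> \<rho>2) \<rho>2" using key[OF a2(1) a1(1) a2(2) a1(2) a2(3) a1(3)] by (simp add: Int_commute)
qed
qed
section \<open>Directions and normals\<close>

lemma direction_eq:
  assumes "x0 \<in> affine hull S"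
  shows "direction S = (\<lambda>y. y - x0) ` (affine hull S)"
proof
  show "direction S \<subseteq> (\<lambda>y. y - x0) ` (affine hull S)"
  proof
    fix w assume "w \<in> direction S"
    then obtain x y where xy: "x \<in> affine hull S" "y \<in> affine hull S" "w = y - x"
      unfolding direction_def by blast
    have "x0 + 1 *\<^sub>R (y - x) \<in> affine hull S"
      using mem_affine_3_minus[OF affine_affine_hull assms xy(2) xy(1)] .
    moreover have "w = (x0 + 1 *\<^sub>R (y - x)) - x0" using xy by simp
    ultimately show "w \<in> (\<lambda>y. y - x0) ` (affine hull S)" by blast
  qed
  show "(\<lambda>y. y - x0) ` (affine hull S) \<subseteq> direction S"
    unfolding direction_def using assms by blast
qed

lemma mem_direction: "x \<in> affine hull S \<Longrightarrow> y \<in> affine hull S \<Longrightarrow> y - x \<in> direction S"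
  unfolding direction_def by blast

lemma subspace_direction:
  assumes "S \<noteq> {}" shows "subspace (direction S)"
proof -
  obtain x0 where "x0 \<in> S" using assms by blast
  then have x0: "x0 \<in> affine hull S" by (rule hull_inc)
  show ?thesis unfolding direction_eq[OF x0]
    using affine_diffs_subspace_subtract[OF affine_affine_hull x0] .
qed

lemma dim_direction:
  fixes S :: "'v::euclidean_space set"
  assumes "S \<noteq> {}" shows "aff_dim S = int (dim (direction S))"
proof -
  obtain x0 where "x0 \<in> S" using assms by blast
  then have x0: "x0 \<in> affine hull S" by (rule hull_inc)
  have "aff_dim (affine hull S) = int (dim ((\<lambda>x. x - x0) ` (affine hull S)))"
    using aff_dim_eq_dim_subtract[of x0 "affine hull S"] x0 by simp
  then show ?thesis unfolding direction_eq[OF x0] by simp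
qed

lemma direction_mono: "S \<subseteq> T \<Longrightarrow> direction S \<subseteq> direction T"
  unfolding direction_def using hull_mono by blast

lemma dir_orth:
  assumes "\<forall>z\<in>S. hf j z = 0" "w \<in> direction S"
  shows "fst j \<bullet> w = 0"
proof -
  have "affine hull S \<subseteq> {y. \<forall>p\<in>{j}. hf p y = 0}"
    using assms(1) by (intro hull_minimal affine_eqs) auto
  moreover obtain x y where "x \<in> affine hull S" "y \<in> affine hull S" "w = y - x"
    using assms(2) unfolding direction_def by blast
  ultimately have "fst j \<bullet> x = snd j" "fst j \<bullet> y = snd j" "w = y - x" by (auto simp: hf_def)
  then show ?thesis by (simp add: inner_diff_right)
qed

definition Phi :: "'v::euclidean_space set \<Rightarrow> 'v set \<Rightarrow> 'v \<Rightarrow> bool" where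
  "Phi P T v \<longleftrightarrow> norm v = 1 \<and> v \<in> direction P \<and> (\<forall>w\<in>direction T. v \<bullet> w = 0) \<and>
       (\<forall>x\<in>T. \<forall>y\<in>P. (y - x) \<bullet> v \<ge> 0)"

lemma vnormal_eq: "vnormal \<iota> \<sigma> \<tau> = (THE v. Phi (\<iota> ` \<sigma>) (\<iota> ` \<tau>) v)"
  unfolding vnormal_def Phi_def by simp

lemma VN:
  fixes P T :: "'v::euclidean_space set"
  assumes cP: "convex P" and TP: "T face_of P" and Tne: "T \<noteq> {}"
    and dm: "aff_dim P = aff_dim T + 1"
  defines "vn \<equiv> THE v. Phi P T v"
  shows "Phi P T vn \<and> (\<forall>x\<in>T. \<forall>y\<in>P. y - x - ((y - x) \<bullet> vn) *\<^sub>R vn \<in> direction T) \<and>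
         (\<exists>y\<in>P. \<forall>x\<in>T. (y - x) \<bullet> vn > 0)"
proof -
  define DT where "DT = direction T"
  define DP where "DP = direction P"
  have TsP: "T \<subseteq> P" using TP face_of_imp_subset by blast
  have Pne: "P \<noteq> {}" using Tne TsP by blast
  obtain x0 where x0T: "x0 \<in> T" using Tne by blast
  have x0aT: "x0 \<in> affine hull T" using x0T by (rule hull_inc)
  have sT: "subspace DT" unfolding DT_def using subspace_direction[OF Tne] .
  have sP: "subspace DP" unfolding DP_def using subspace_direction[OF Pne] .
  have TP': "DT \<subseteq> DP" unfolding DT_def DP_def using direction_mono[OF TsP] .
  have dimeq: "dim DP = dim DT + 1"
    using dm dim_direction[OF Tne] dim_direction[OF Pne] unfolding DT_def DP_def by simp
  have "span DT \<subset> span DP"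
  proof -
    have "DT \<noteq> DP" using dimeq by auto
    then show ?thesis using TP' sT sP by (simp add: span_eq_iff[THEN iffD2] psubset_eq)
  qed
  then obtain u0 where u0: "u0 \<noteq> 0" "u0 \<in> span DP" "\<And>y. y \<in> span DT \<Longrightarrow> orthogonal u0 y"
    by (rule orthogonal_to_subspace_exists_gen) auto
  define u where "u = u0 /\<^sub>R norm u0"
  have nu: "norm u = 1" unfolding u_def using u0(1) by simp
  have uu: "u \<bullet> u = 1" using nu by (simp add: dot_square_norm)
  have uP: "u \<in> DP" unfolding u_def using u0(2) sP by (simp add: span_eq_iff[THEN iffD2] subspace_scale)
  have uT: "\<forall>w\<in>DT. u \<bullet> w = 0"
    using u0(3) sT unfolding u_def orthogonal_def by (simp add: span_eq_iff[THEN iffD2])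
  have DTeq: "DP \<inter> {z. u \<bullet> z = 0} = DT"
  proof (rule subspace_dim_equal[symmetric])
    show "subspace DT" by fact
    show "subspace (DP \<inter> {z. u \<bullet> z = 0})" using sP subspace_hyperplane[of u] by (rule subspace_inter)
    show "DT \<subseteq> DP \<inter> {z. u \<bullet> z = 0}" using TP' uT by auto
    have "span (DP \<inter> {z. u \<bullet> z = 0}) \<subset> span DP"
    proof -
      have "subspace (DP \<inter> {z. u \<bullet> z = 0})" using sP subspace_hyperplane[of u] by (rule subspace_inter)
      then have e1: "span (DP \<inter> {z. u \<bullet> z = 0}) = DP \<inter> {z. u \<bullet> z = 0}" by (simp add: span_eq_iff)
      have e2: "span DP = DP" using sP by (simp add: span_eq_iff)
      have "u \<notin> DP \<inter> {z. u \<bullet> z = 0}" using uu by auto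
      then have "DP \<inter> {z. u \<bullet> z = 0} \<noteq> DP" using uP by blast
      then show ?thesis unfolding e1 e2 by blast
    qed
    then have "dim (DP \<inter> {z. u \<bullet> z = 0}) < dim DP" by (rule dim_psubset)
    then show "dim (DP \<inter> {z. u \<bullet> z = 0}) \<le> dim DT" using dimeq by simp
  qed
  have decomp: "z - (z \<bullet> u) *\<^sub>R u \<in> DT" if "z \<in> DP" for z
  proof -
    have "z - (z \<bullet> u) *\<^sub>R u \<in> DP" using that uP sP by (simp add: subspace_diff subspace_scale)
    moreover have "u \<bullet> (z - (z \<bullet> u) *\<^sub>R u) = 0" using uu by (simp add: inner_diff_right inner_commute)
    ultimately show ?thesis using DTeq by blast
  qed
  have inaffT: "z \<in> affine hull T" if zT: "z - x0 \<in> DT" for z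
  proof -
    obtain y where "y \<in> affine hull T" "z - x0 = y - x0"
      using zT unfolding DT_def direction_eq[OF x0aT] by blast
    then show ?thesis by simp
  qed
  have Taff: "T = affine hull T \<inter> P" using face_of_imp_eq_affine_Int[OF cP TP] .
  define g where "g y = (y - x0) \<bullet> u" for y
  have gT: "(y - x) \<bullet> u = g y" if "x \<in> T" for x y
  proof -
    have "x - x0 \<in> DT" unfolding DT_def using that x0T by (intro mem_direction hull_inc)
    then have "u \<bullet> (x - x0) = 0" using uT by blast
    then show ?thesis unfolding g_def by (simp add: inner_diff_left inner_diff_right inner_commute)
  qed
  have yDP: "y - x \<in> DP" if "x \<in> P" "y \<in> P" for x y
    unfolding DP_def using that by (intro mem_direction hull_inc)
  have sgn: "(\<forall>y\<in>P. g y \<ge> 0) \<or> (\<forall>y\<in>P. g y \<le> 0)"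
  proof (rule ccontr)
    assume "\<not> ?thesis"
    then obtain y1 y2 where y: "y1 \<in> P" "y2 \<in> P" "g y1 < 0" "g y2 > 0" by (auto simp: not_le)
    define t where "t = g y1 / (g y1 - g y2)"
    have t: "0 < t" "t < 1" using y unfolding t_def by (auto simp: field_simps)
    define z where "z = (1 - t) *\<^sub>R y1 + t *\<^sub>R y2"
    have zP: "z \<in> P" using cP y t unfolding z_def convex_alt by auto
    have "g z = (1 - t) * g y1 + t * g y2" unfolding z_def g_def
      by (simp add: inner_diff_left inner_add_left algebra_simps)
    then have gz: "g z = 0" unfolding t_def using y by (simp add: field_simps)
    have "z - x0 \<in> DT"
    proof -
      have "z - x0 \<in> DP" using yDP[OF _ zP] x0T TsP by blast
      moreover have "u \<bullet> (z - x0) = 0" using gz unfolding g_def by (simp add: inner_commute)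
      ultimately show ?thesis using DTeq by blast
    qed
    then have "z \<in> T" using inaffT zP Taff by blast
    moreover have "y1 \<noteq> y2" using y by auto
    then have "z \<in> open_segment y1 y2" unfolding z_def in_segment using t by blast
    ultimately have "y1 \<in> T" using TP y unfolding face_of_def by blast
    then have "g y1 = 0" using gT[of x0 y1] x0T
      by (metis diff_self inner_zero_left gT)
    then show False using y by simp
  qed
  have nontriv: "\<exists>y\<in>P. g y \<noteq> 0"
  proof (rule ccontr)
    assume "\<not> ?thesis"
    then have "\<forall>y\<in>P. y - x0 \<in> DT"
      using yDP x0T TsP DTeq unfolding g_def by (auto simp: inner_commute)
    then have "P \<subseteq> affine hull T" using inaffT by blast
    then have "aff_dim P \<le> aff_dim T" using aff_dim_subset[of P "affine hull T"] by simp
    then show False using dm by simp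
  qed
  define e :: real where "e = (if \<forall>y\<in>P. g y \<ge> 0 then 1 else -1)"
  have e: "e = 1 \<or> e = -1" "\<forall>y\<in>P. e * g y \<ge> 0" unfolding e_def using sgn by (auto simp: mult_le_0_iff)
  define v where "v = e *\<^sub>R u"
  have Pv: "Phi P T v" unfolding Phi_def
  proof (intro conjI ballI)
    show "norm v = 1" unfolding v_def using e nu by auto
    show "v \<in> direction P" unfolding v_def using uP sP DP_def by (simp add: subspace_scale)
    show "v \<bullet> w = 0" if "w \<in> direction T" for w using uT that unfolding v_def DT_def by simp
    show "(y - x) \<bullet> v \<ge> 0" if "x \<in> T" "y \<in> P" for x y
      using gT[OF that(1)] e that(2) unfolding v_def by (simp add: mult.commute)
  qed
  have uniq: "v' = v" if "Phi P T v'" for v'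
  proof -
    have v'P: "v' \<in> DP" and v'T: "\<forall>w\<in>DT. v' \<bullet> w = 0" and nv': "norm v' = 1"
      and pos': "\<forall>x\<in>T. \<forall>y\<in>P. (y - x) \<bullet> v' \<ge> 0"
      using that unfolding Phi_def DP_def DT_def by auto
    define c where "c = v' \<bullet> u"
    have r: "v' - c *\<^sub>R u \<in> DT" unfolding c_def using decomp[OF v'P] .
    have "(v' - c *\<^sub>R u) \<bullet> (v' - c *\<^sub>R u) = 0"
    proof -
      have "v' \<bullet> (v' - c *\<^sub>R u) = 0" using v'T r by blast
      moreover have "u \<bullet> (v' - c *\<^sub>R u) = 0" using uT r by blast
      ultimately show ?thesis by (simp add: inner_diff_left)
    qed
    then have v'eq: "v' = c *\<^sub>R u" by simp
    then have "\<bar>c\<bar> = 1" using nv' nu by simp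
    obtain y where y: "y \<in> P" "g y \<noteq> 0" using nontriv by blast
    have "(y - x0) \<bullet> v' \<ge> 0" using pos' x0T y by blast
    then have cg: "c * g y \<ge> 0" unfolding v'eq g_def by (simp add: mult.commute)
    have eg: "e * g y > 0" using e y by (auto simp: less_le)
    have "c = e"
    proof (rule ccontr)
      assume "c \<noteq> e"
      then have "c = - e" using \<open>\<bar>c\<bar> = 1\<close> e(1) by auto
      then show False using cg eg by simp
    qed
    then show ?thesis unfolding v'eq v_def by simp
  qed
  have vn: "vn = v" unfolding vn_def using Pv uniq by (rule the_equality)
  show ?thesis
  proof (intro conjI)
    show "Phi P T vn" using Pv vn by simp
    show "\<forall>x\<in>T. \<forall>y\<in>P. y - x - ((y - x) \<bullet> vn) *\<^sub>R vn \<in> direction T"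
    proof (intro ballI)
      fix x y assume "x \<in> T" "y \<in> P"
      then have "y - x \<in> DP" using yDP TsP by blast
      then have "y - x - ((y - x) \<bullet> u) *\<^sub>R u \<in> DT" by (rule decomp)
      moreover have "((y - x) \<bullet> vn) *\<^sub>R vn = ((y - x) \<bullet> u) *\<^sub>R u"
        unfolding vn v_def using e(1) by auto
      ultimately show "y - x - ((y - x) \<bullet> vn) *\<^sub>R vn \<in> direction T" unfolding DT_def by simp
    qed
    obtain y where y: "y \<in> P" "g y \<noteq> 0" using nontriv by blast
    have "\<forall>x\<in>T. (y - x) \<bullet> vn > 0"
    proof
      fix x assume "x \<in> T"
      have "e * g y > 0" using e y by (auto simp: less_le)
      then show "(y - x) \<bullet> vn > 0" unfolding vn v_def using gT[OF \<open>x \<in> T\<close>] by (simp add: mult.commute)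
    qed
    then show "\<exists>y\<in>P. \<forall>x\<in>T. (y - x) \<bullet> vn > 0" using y by blast
  qed
qed

lemma linear_inner: "linear (\<lambda>y. w \<bullet> y)"
  using bounded_linear_inner_right[of w] bounded_linear.linear by blast

lemma lin_part_val:
  fixes \<iota> :: "'a \<Rightarrow> 'v::euclidean_space"
  assumes EC: "euclidean_complex X \<iota> S" and \<sigma>: "\<sigma> \<in> S" and V: "openin X V" and ne: "\<sigma> \<inter> V \<noteq> {}"
    and fw: "\<forall>x\<in>\<sigma>. f x = w \<bullet> \<iota> x" and vd: "v \<in> direction (\<iota> ` \<sigma>)"
  shows "lin_part \<iota> V f \<sigma> v = w \<bullet> v"
proof -
  define g where "g = lin_part \<iota> V f \<sigma>"
  have "linear (\<lambda>y. w \<bullet> y) \<and> (\<forall>x\<in>\<sigma> \<inter> V. f x = w \<bullet> \<iota> x)" using fw linear_inner by blast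
  then have g: "linear g \<and> (\<forall>x\<in>\<sigma> \<inter> V. f x = g (\<iota> x))"
    unfolding g_def lin_part_def by (rule someI[where P="\<lambda>g. linear g \<and> (\<forall>x\<in>\<sigma> \<inter> V. f x = g (\<iota> x))"])
  define h where "h y = g y - w \<bullet> y" for y
  have lh: "linear h" unfolding h_def using g linear_inner by (intro linear_compose_sub) auto
  define W where "W = \<iota> ` (\<sigma> \<inter> V)"
  have h0: "h y = 0" if "y \<in> W" for y using that g fw unfolding W_def h_def by auto
  have st: "\<sigma> \<subseteq> topspace X" using EC_union[OF EC] \<sigma> by blast
  have hom: "homeomorphic_map (subtopology X \<sigma>) (top_of_set (\<iota> ` \<sigma>)) \<iota>" using EC_hom[OF EC \<sigma>] .
  have "openin (subtopology X \<sigma>) (\<sigma> \<inter> V)" using V by (rule openin_subtopology_Int2)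
  moreover have "\<sigma> \<inter> V \<subseteq> topspace (subtopology X \<sigma>)" using st by auto
  ultimately have "openin (top_of_set (\<iota> ` \<sigma>)) W"
    unfolding W_def using homeomorphic_map_openness[OF hom] by blast
  then obtain O' where O': "open O'" "W = \<iota> ` \<sigma> \<inter> O'" unfolding openin_open by blast
  have cv: "convex (\<iota> ` \<sigma>)" using EC_poly[OF EC \<sigma>] polyhedron_imp_convex by blast
  have "W \<noteq> {}" using ne unfolding W_def by blast
  then have aff: "affine hull W = affine hull (\<iota> ` \<sigma>)"
    unfolding O'(2) using affine_hull_convex_Int_open[OF cv O'(1)] by simp
  obtain x y where xy: "x \<in> affine hull (\<iota> ` \<sigma>)" "y \<in> affine hull (\<iota> ` \<sigma>)" "v = y - x"
    using vd unfolding direction_def by blast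
  have "x \<in> span W" "y \<in> span W" using xy aff affine_hull_subset_span by blast+
  then have "h x = 0" "h y = 0" using linear_eq_0_on_span[OF lh h0] by blast+
  then have "h v = 0" unfolding xy(3) using linear_diff[OF lh] by simp
  then show ?thesis unfolding h_def g_def by simp
qed

lemma sepB:
  fixes Q0 :: "'v::euclidean_space set"
  assumes Q0: "polyhedron Q0" and CJ: "Crep Q0 \<subseteq> J" and J: "finite J" and s: "s \<in> SV J"
    and T: "T face_of (Q0 \<inter> Kc J s)" and Tne: "T \<noteq> {}" and TQ: "T \<noteq> Q0 \<inter> Kc J s"
  shows "\<exists>j\<in>J. (\<forall>z\<in>T. hf j z = 0) \<and> (\<exists>y\<in>Q0 \<inter> Kc J s. hf j y \<noteq> 0)"
proof -
  define D where "D = Crep Q0 \<union> Jc J s"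
  have fD: "finite D" unfolding D_def using Crep[OF Q0] finite_Jc[OF J] by auto
  have QK: "Q0 \<inter> Kc J s = affine hull Q0 \<inter> {y. \<forall>p\<in>D. hf p y \<le> 0}"
    unfolding D_def by (rule REPK[OF Q0 s])
  have Teq: "T = (Q0 \<inter> Kc J s) \<inter> {y. \<forall>p\<in>D. (\<forall>z\<in>T. hf p z = 0) \<longrightarrow> hf p y = 0}"
    using GFL[OF affine_affine_hull fD QK T Tne] .
  obtain p where p: "p \<in> D" "\<forall>z\<in>T. hf p z = 0" "\<exists>y\<in>Q0 \<inter> Kc J s. hf p y \<noteq> 0"
  proof (rule ccontr)
    assume "\<not> thesis"
    then have "\<forall>p\<in>D. (\<forall>z\<in>T. hf p z = 0) \<longrightarrow> (\<forall>y\<in>Q0 \<inter> Kc J s. hf p y = 0)" using that by blast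
    then have "T = Q0 \<inter> Kc J s" using Teq by blast
    then show False using TQ by blast
  qed
  consider "p \<in> Crep Q0" | "p \<in> J" | j where "j \<in> J" "p = negp j"
    using p(1) unfolding D_def Jc_def by blast
  then show ?thesis
  proof cases
    case 1 then show ?thesis using p CJ by blast
  next
    case 2 then show ?thesis using p by blast
  next
    case 3 then show ?thesis using p by (intro bexI[of _ j]) auto
  qed
qed

section \<open>Strict positivity\<close>

lemma strict_sum:
  fixes T :: "'v::euclidean_space set" and Pc :: "'s \<Rightarrow> 'v set" and vv :: "'s \<Rightarrow> 'v" and c :: "'s \<Rightarrow> real"
  assumes Sg: "finite Sg" and J: "finite J"
    and cnn: "\<forall>\<sigma>\<in>Sg. c \<sigma> \<ge> 0"
    and bal: "(\<Sum>\<sigma>\<in>Sg. c \<sigma> *\<^sub>R vv \<sigma>) = 0"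
    and TP: "\<forall>\<sigma>\<in>Sg. T \<subseteq> Pc \<sigma>" and Tne: "T \<noteq> {}"
    and pos: "\<forall>\<sigma>\<in>Sg. \<forall>x\<in>T. \<forall>y\<in>Pc \<sigma>. (y - x) \<bullet> vv \<sigma> \<ge> 0"
    and dec: "\<forall>\<sigma>\<in>Sg. \<forall>x\<in>T. \<forall>y\<in>Pc \<sigma>. y - x - ((y - x) \<bullet> vv \<sigma>) *\<^sub>R vv \<sigma> \<in> direction T"
    and ex: "\<forall>\<sigma>\<in>Sg. \<exists>y\<in>Pc \<sigma>. \<forall>x\<in>T. (y - x) \<bullet> vv \<sigma> > 0"
    and sg: "\<forall>\<sigma>\<in>Sg. \<forall>j\<in>J. (\<forall>y\<in>Pc \<sigma>. hf j y \<le> 0) \<or> (\<forall>y\<in>Pc \<sigma>. hf j y \<ge> 0)"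
    and st: "\<sigma>s \<in> Sg" "c \<sigma>s > 0" "js \<in> J" "\<forall>z\<in>T. hf js z = 0" "\<exists>y\<in>Pc \<sigma>s. hf js y \<noteq> 0"
  shows "0 < - (\<Sum>\<sigma>\<in>Sg. c \<sigma> * (\<Sum>j\<in>Nset J (Pc \<sigma>). fst j \<bullet> vv \<sigma>))"
proof -
  define Tj where "Tj j = (\<Sum>\<sigma>\<in>Sg. c \<sigma> * (if j \<in> Nset J (Pc \<sigma>) then - (fst j \<bullet> vv \<sigma>) else 0))" for j
  have eq: "- (\<Sum>\<sigma>\<in>Sg. c \<sigma> * (\<Sum>j\<in>Nset J (Pc \<sigma>). fst j \<bullet> vv \<sigma>)) = (\<Sum>j\<in>J. Tj j)"
  proof -
    have e1: "(\<Sum>j\<in>Nset J (Pc \<sigma>). fst j \<bullet> vv \<sigma>) = (\<Sum>j\<in>J. if j \<in> Nset J (Pc \<sigma>) then fst j \<bullet> vv \<sigma> else 0)" for \<sigma>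
    proof -
      have "Nset J (Pc \<sigma>) = J \<inter> Nset J (Pc \<sigma>)" unfolding Nset_def by auto
      then show ?thesis using sum.inter_restrict[OF J, of "\<lambda>j. fst j \<bullet> vv \<sigma>" "Nset J (Pc \<sigma>)"] by simp
    qed
    have "- (\<Sum>\<sigma>\<in>Sg. c \<sigma> * (\<Sum>j\<in>Nset J (Pc \<sigma>). fst j \<bullet> vv \<sigma>))
        = (\<Sum>\<sigma>\<in>Sg. \<Sum>j\<in>J. c \<sigma> * (if j \<in> Nset J (Pc \<sigma>) then - (fst j \<bullet> vv \<sigma>) else 0))"
      unfolding e1 by (simp add: sum_distrib_left sum_negf[symmetric] if_distrib cong: if_cong)
    also have "\<dots> = (\<Sum>j\<in>J. Tj j)" unfolding Tj_def by (rule sum.swap)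
    finally show ?thesis .
  qed
  obtain x0 where x0: "x0 \<in> T" using Tne by blast
  have caseC: "Tj j = (\<Sum>\<sigma>\<in>Sg. c \<sigma> * (if fst j \<bullet> vv \<sigma> < 0 then - (fst j \<bullet> vv \<sigma>) else 0))
      \<and> (\<forall>\<sigma>\<in>Sg. (\<exists>y\<in>Pc \<sigma>. hf j y \<noteq> 0) \<longrightarrow> fst j \<bullet> vv \<sigma> \<noteq> 0)"
    if jJ: "j \<in> J" and z: "\<forall>z\<in>T. hf j z = 0" for j
  proof -
    have key: "hf j y = ((y - x0) \<bullet> vv \<sigma>) * (fst j \<bullet> vv \<sigma>)" if \<sigma>: "\<sigma> \<in> Sg" and y: "y \<in> Pc \<sigma>" for \<sigma> y
    proof -
      define t where "t = (y - x0) \<bullet> vv \<sigma>"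
      define w where "w = y - x0 - t *\<^sub>R vv \<sigma>"
      have "w \<in> direction T" unfolding w_def t_def using dec \<sigma> x0 y by blast
      then have aw: "fst j \<bullet> w = 0" using dir_orth z by blast
      have "hf j x0 = 0" using z x0 by blast
      then have "snd j = fst j \<bullet> x0" unfolding hf_def by simp
      then have "hf j y = fst j \<bullet> (y - x0)" unfolding hf_def by (simp add: inner_diff_right)
      also have "y - x0 = w + t *\<^sub>R vv \<sigma>" unfolding w_def by simp
      finally show ?thesis using aw unfolding t_def by (simp add: inner_add_right)
    qed
    have inN: "j \<in> Nset J (Pc \<sigma>) \<longleftrightarrow> fst j \<bullet> vv \<sigma> < 0" if \<sigma>: "\<sigma> \<in> Sg" for \<sigma>
    proof
      assume "j \<in> Nset J (Pc \<sigma>)"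
      then obtain y where y: "y \<in> Pc \<sigma>" "hf j y < 0" unfolding Nset_def by blast
      have "(y - x0) \<bullet> vv \<sigma> \<ge> 0" using pos \<sigma> x0 y by blast
      then show "fst j \<bullet> vv \<sigma> < 0" using key[OF \<sigma> y(1)] y(2) by (auto simp: mult_less_0_iff)
    next
      assume a: "fst j \<bullet> vv \<sigma> < 0"
      obtain y where y: "y \<in> Pc \<sigma>" "\<forall>x\<in>T. (y - x) \<bullet> vv \<sigma> > 0" using ex \<sigma> by blast
      have "hf j y < 0" using key[OF \<sigma> y(1)] y(2) x0 a by (simp add: mult_pos_neg)
      then show "j \<in> Nset J (Pc \<sigma>)" unfolding Nset_def using jJ y(1) by blast
    qed
    have "Tj j = (\<Sum>\<sigma>\<in>Sg. c \<sigma> * (if fst j \<bullet> vv \<sigma> < 0 then - (fst j \<bullet> vv \<sigma>) else 0))"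
      unfolding Tj_def using inN by (intro sum.cong) auto
    moreover have "\<forall>\<sigma>\<in>Sg. (\<exists>y\<in>Pc \<sigma>. hf j y \<noteq> 0) \<longrightarrow> fst j \<bullet> vv \<sigma> \<noteq> 0"
      using key by fastforce
    ultimately show ?thesis by blast
  qed
  have Tnn: "Tj j \<ge> 0" if jJ: "j \<in> J" for j
  proof (cases "\<forall>z\<in>T. hf j z = 0")
    case True
    then show ?thesis using caseC[OF jJ True] cnn by (auto intro!: sum_nonneg mult_nonneg_nonneg)
  next
    case False
    then obtain z where z: "z \<in> T" "hf j z \<noteq> 0" by blast
    show ?thesis
    proof (cases "hf j z < 0")
      case True
      then have "\<forall>\<sigma>\<in>Sg. j \<in> Nset J (Pc \<sigma>)" using TP z jJ unfolding Nset_def by blast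
      then have "Tj j = - (fst j \<bullet> (\<Sum>\<sigma>\<in>Sg. c \<sigma> *\<^sub>R vv \<sigma>))"
        unfolding Tj_def by (simp add: inner_sum_right sum_negf[symmetric])
      then show ?thesis using bal by simp
    next
      case False
      then have zp: "hf j z > 0" using z by auto
      have "\<forall>\<sigma>\<in>Sg. j \<notin> Nset J (Pc \<sigma>)"
      proof
        fix \<sigma> assume \<sigma>: "\<sigma> \<in> Sg"
        have "z \<in> Pc \<sigma>" using TP \<sigma> z by blast
        then have "\<forall>y\<in>Pc \<sigma>. hf j y \<ge> 0" using sg \<sigma> jJ zp by fastforce
        then show "j \<notin> Nset J (Pc \<sigma>)" unfolding Nset_def by (auto simp: not_less)
      qed
      then have "Tj j = 0" unfolding Tj_def by simp
      then show ?thesis by simp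
    qed
  qed
  have Tpos: "Tj js > 0"
  proof -
    note C = caseC[OF st(3) st(4)]
    define p where "p \<sigma> = fst js \<bullet> vv \<sigma>" for \<sigma>
    have ps: "p \<sigma>s \<noteq> 0" unfolding p_def using C st(1,5) by blast
    have sp: "(\<Sum>\<sigma>\<in>Sg. c \<sigma> * p \<sigma>) = 0"
    proof -
      have "fst js \<bullet> (\<Sum>\<sigma>\<in>Sg. c \<sigma> *\<^sub>R vv \<sigma>) = 0" using bal by simp
      then show ?thesis unfolding p_def by (simp add: inner_sum_right)
    qed
    have TT: "Tj js = (\<Sum>\<sigma>\<in>Sg. c \<sigma> * (if p \<sigma> < 0 then - p \<sigma> else 0))" using C unfolding p_def by blast
    show ?thesis
    proof (cases "p \<sigma>s < 0")
      case True
      have "c \<sigma>s * (if p \<sigma>s < 0 then - p \<sigma>s else 0) \<le> (\<Sum>\<sigma>\<in>Sg. c \<sigma> * (if p \<sigma> < 0 then - p \<sigma> else 0))"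
        using cnn by (intro member_le_sum[OF st(1) _ Sg]) (auto intro!: mult_nonneg_nonneg)
      moreover have "c \<sigma>s * (if p \<sigma>s < 0 then - p \<sigma>s else 0) > 0" using True st(2) by (simp add: mult_pos_neg)
      ultimately show ?thesis unfolding TT by linarith
    next
      case False
      then have pp: "p \<sigma>s > 0" using ps by auto
      have "Tj js = (\<Sum>\<sigma>\<in>Sg. c \<sigma> * (if p \<sigma> < 0 then - p \<sigma> else 0)) + (\<Sum>\<sigma>\<in>Sg. c \<sigma> * p \<sigma>)"
        unfolding TT sp by simp
      also have "\<dots> = (\<Sum>\<sigma>\<in>Sg. c \<sigma> * (if p \<sigma> < 0 then 0 else p \<sigma>))"
        by (subst sum.distrib[symmetric]) (auto intro!: sum.cong simp: algebra_simps)
      finally have TT2: "Tj js = (\<Sum>\<sigma>\<in>Sg. c \<sigma> * (if p \<sigma> < 0 then 0 else p \<sigma>))" .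
      have "c \<sigma>s * (if p \<sigma>s < 0 then 0 else p \<sigma>s) \<le> (\<Sum>\<sigma>\<in>Sg. c \<sigma> * (if p \<sigma> < 0 then 0 else p \<sigma>))"
        using cnn by (intro member_le_sum[OF st(1) _ Sg]) (auto intro!: mult_nonneg_nonneg)
      moreover have "c \<sigma>s * (if p \<sigma>s < 0 then 0 else p \<sigma>s) > 0" using pp st(2) by simp
      ultimately show ?thesis unfolding TT2 by linarith
    qed
  qed
  have "Tj js \<le> (\<Sum>j\<in>J. Tj j)" using Tnn by (intro member_le_sum[OF st(3) _ J]) auto
  then show ?thesis unfolding eq using Tpos by linarith
qed

definition wv :: "('v::euclidean_space \<times> real) set \<Rightarrow> 'v \<Rightarrow> real \<Rightarrow> 'v set \<Rightarrow> 'v" where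
  "wv J \<alpha> \<beta> R = (\<Sum>j\<in>Nset J R. fst j - (snd j / \<beta>) *\<^sub>R \<alpha>)"

context
  fixes X :: "'a topology" and \<iota> :: "'a \<Rightarrow> 'v::euclidean_space" and P :: "'a set set"
    and J :: "('v \<times> real) set" and \<alpha> :: 'v and \<beta> :: real
  assumes EC: "euclidean_complex X \<iota> P" and J: "finite J"
    and Hsub: "\<forall>x\<in>topspace X. \<alpha> \<bullet> \<iota> x = \<beta>" and \<beta>: "\<beta> \<noteq> 0"
begin

lemma cell_sub: "\<rho> \<in> cells \<iota> P J \<Longrightarrow> \<rho> \<subseteq> topspace X"
  using EC_union[OF EC] unfolding cells_def by blast

lemma cell_signs:
  assumes "\<rho> \<in> cells \<iota> P J"
  shows "\<forall>j\<in>J. (\<forall>y\<in>\<iota> ` \<rho>. hf j y \<le> 0) \<or> (\<forall>y\<in>\<iota> ` \<rho>. hf j y \<ge> 0)"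
proof
  fix j assume j: "j \<in> J"
  obtain \<sigma> s where "\<sigma> \<in> P" "s \<in> SV J" "\<rho> = \<sigma> \<inter> \<iota> -` Kc J s" using assms unfolding cells_def by blast
  then show "(\<forall>y\<in>\<iota> ` \<rho>. hf j y \<le> 0) \<or> (\<forall>y\<in>\<iota> ` \<rho>. hf j y \<ge> 0)"
    using Kc_signs[of s J j "\<iota> ` \<rho>"] j by blast
qed

lemma wvec:
  assumes "\<rho> \<in> cells \<iota> P J"
  shows "\<forall>x\<in>\<rho>. fP J (\<iota> x) = wv J \<alpha> \<beta> (\<iota> ` \<rho>) \<bullet> \<iota> x"
proof
  fix x assume x: "x \<in> \<rho>"
  have ab: "\<alpha> \<bullet> \<iota> x = \<beta>" using Hsub cell_sub[OF assms] x by blast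
  have "fP J (\<iota> x) = (\<Sum>j\<in>Nset J (\<iota> ` \<rho>). hf j (\<iota> x))"
    using fP_Nset[OF J cell_signs[OF assms]] x by blast
  also have "\<dots> = (\<Sum>j\<in>Nset J (\<iota> ` \<rho>). (fst j - (snd j / \<beta>) *\<^sub>R \<alpha>) \<bullet> \<iota> x)"
    using ab \<beta> by (intro sum.cong) (auto simp: hf_def inner_diff_left)
  also have "\<dots> = wv J \<alpha> \<beta> (\<iota> ` \<rho>) \<bullet> \<iota> x" unfolding wv_def by (simp add: inner_sum_left)
  finally show "fP J (\<iota> x) = wv J \<alpha> \<beta> (\<iota> ` \<rho>) \<bullet> \<iota> x" .
qed

lemma wvec_dir:
  assumes "\<rho> \<in> cells \<iota> P J" "v \<in> direction (\<iota> ` \<rho>)"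
  shows "wv J \<alpha> \<beta> (\<iota> ` \<rho>) \<bullet> v = (\<Sum>j\<in>Nset J (\<iota> ` \<rho>). fst j \<bullet> v)"
proof -
  have "\<forall>z\<in>\<iota> ` \<rho>. hf (\<alpha>, \<beta>) z = 0" using Hsub cell_sub[OF assms(1)] by (auto simp: hf_def)
  then have "fst (\<alpha>, \<beta>) \<bullet> v = 0" using assms(2) by (rule dir_orth)
  then have av: "\<alpha> \<bullet> v = 0" by simp
  show ?thesis unfolding wv_def by (simp add: inner_sum_left inner_diff_left av)
qed

lemma pwa: "pw_affine_on \<iota> (cells \<iota> P J) V (\<lambda>x. fP J (\<iota> x))"
  unfolding pw_affine_on_def
proof
  fix \<rho> assume "\<rho> \<in> restr (cells \<iota> P J) V"
  then have \<rho>: "\<rho> \<in> cells \<iota> P J" unfolding restr_def by blast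
  show "\<exists>g. linear g \<and> (\<forall>x\<in>\<rho> \<inter> V. fP J (\<iota> x) = g (\<iota> x))"
    using wvec[OF \<rho>] linear_inner by blast
qed

lemma strict_main:
  assumes U: "openin X U" and CJ: "\<forall>\<sigma>\<in>restr P U. Crep (\<iota> ` \<sigma>) \<subseteq> J"
    and fin: "finite (restr (cells \<iota> P J) U)"
  shows "strictly_concave_on_complex X \<iota> (cells \<iota> P J) U (\<lambda>x. fP J (\<iota> x))"
  unfolding strictly_concave_on_complex_def
proof (intro conjI allI ballI impI)
  show "pw_affine_on \<iota> (cells \<iota> P J) U (\<lambda>x. fP J (\<iota> x))" by (rule pwa)
  define S where "S = cells \<iota> P J"
  fix k \<tau> V c
  assume \<tau>: "\<tau> \<in> restr_dim \<iota> (cells \<iota> P J) U k"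
    and V: "openin X V \<and> V \<subseteq> U \<and> V \<inter> \<tau> \<noteq> {}"
    and cc: "pos_minkowski_weight \<iota> (cells \<iota> P J) V (k + 1) c \<and>
             (\<exists>\<sigma>\<in>restr_dim \<iota> (cells \<iota> P J) V (k + 1). pface \<iota> \<tau> \<sigma> \<and> 0 < c \<sigma>)"
  define Sg where "Sg = {\<sigma>\<in>restr_dim \<iota> S V (k + 1). pface \<iota> \<tau> \<sigma>}"
  have ECS: "euclidean_complex X \<iota> S" unfolding S_def using EC_cells[OF EC J] .
  have \<tau>S: "\<tau> \<in> S" and \<tau>k: "pdim \<iota> \<tau> = k" using \<tau> unfolding S_def restr_dim_def restr_def by auto
  have \<tau>V: "\<tau> \<in> restr_dim \<iota> S V k" using \<tau>S \<tau>k V unfolding restr_dim_def restr_def by auto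
  have bal: "(\<Sum>\<sigma>\<in>Sg. c \<sigma> *\<^sub>R vnormal \<iota> \<sigma> \<tau>) = 0"
    using cc \<tau>V unfolding pos_minkowski_weight_def Sg_def S_def by simp
  have cnn: "\<forall>\<sigma>\<in>Sg. c \<sigma> \<ge> 0" using cc unfolding pos_minkowski_weight_def Sg_def S_def by blast
  have "Sg \<subseteq> restr (cells \<iota> P J) U" using V unfolding Sg_def S_def restr_dim_def restr_def by blast
  then have finSg: "finite Sg" using fin finite_subset by blast
  have Sg_facts: "\<sigma> \<in> S \<and> \<sigma> \<inter> V \<noteq> {} \<and> pdim \<iota> \<sigma> = k + 1 \<and> \<tau> \<subseteq> \<sigma> \<and> (\<iota> ` \<tau>) face_of (\<iota> ` \<sigma>)"
    if "\<sigma> \<in> Sg" for \<sigma>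
    using that unfolding Sg_def restr_dim_def restr_def pface_def by blast
  have Tne: "\<iota> ` \<tau> \<noteq> {}" using V by blast
  have VNs: "Phi (\<iota> ` \<sigma>) (\<iota> ` \<tau>) (vnormal \<iota> \<sigma> \<tau>) \<and>
      (\<forall>x\<in>\<iota> ` \<tau>. \<forall>y\<in>\<iota> ` \<sigma>. y - x - ((y - x) \<bullet> vnormal \<iota> \<sigma> \<tau>) *\<^sub>R vnormal \<iota> \<sigma> \<tau> \<in> direction (\<iota> ` \<tau>)) \<and>
      (\<exists>y\<in>\<iota> ` \<sigma>. \<forall>x\<in>\<iota> ` \<tau>. (y - x) \<bullet> vnormal \<iota> \<sigma> \<tau> > 0)" if \<sigma>: "\<sigma> \<in> Sg" for \<sigma>
  proof -
    note F = Sg_facts[OF \<sigma>]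
    have cv: "convex (\<iota> ` \<sigma>)" using EC_poly[OF ECS] F polyhedron_imp_convex by blast
    have "aff_dim (\<iota> ` \<sigma>) = aff_dim (\<iota> ` \<tau>) + 1" using F \<tau>k unfolding pdim_def by simp
    from VN[OF cv _ Tne this] F show ?thesis unfolding vnormal_eq by blast
  qed
  obtain \<sigma>s where \<sigma>s: "\<sigma>s \<in> Sg" "c \<sigma>s > 0"
    using cc unfolding Sg_def S_def by blast
  obtain js where js: "js \<in> J" "\<forall>z\<in>\<iota> ` \<tau>. hf js z = 0" "\<exists>y\<in>\<iota> ` \<sigma>s. hf js y \<noteq> 0"
  proof -
    note F = Sg_facts[OF \<sigma>s(1)]
    obtain \<sigma>0 s where s0: "\<sigma>0 \<in> P" "s \<in> SV J" "\<sigma>s = \<sigma>0 \<inter> \<iota> -` Kc J s"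
      using F unfolding S_def cells_def by blast
    have "\<sigma>0 \<in> restr P U" using s0 F V unfolding restr_def by blast
    then have C0: "Crep (\<iota> ` \<sigma>0) \<subseteq> J" using CJ by blast
    have img: "\<iota> ` \<sigma>s = \<iota> ` \<sigma>0 \<inter> Kc J s" unfolding s0(3) by auto
    have d1: "aff_dim (\<iota> ` \<sigma>s) = k + 1" using F unfolding pdim_def by blast
    have d2: "aff_dim (\<iota> ` \<tau>) = k" using \<tau>k unfolding pdim_def .
    have "\<iota> ` \<tau> \<noteq> \<iota> ` \<sigma>s"
    proof
      assume "\<iota> ` \<tau> = \<iota> ` \<sigma>s"
      then have "aff_dim (\<iota> ` \<tau>) = aff_dim (\<iota> ` \<sigma>s)" by simp
      then show False using d1 d2 by simp
    qed
    then have "\<exists>j\<in>J. (\<forall>z\<in>\<iota> ` \<tau>. hf j z = 0) \<and> (\<exists>y\<in>\<iota> ` \<sigma>0 \<inter> Kc J s. hf j y \<noteq> 0)"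
      using sepB[OF EC_poly[OF EC s0(1)] C0 J s0(2)] F Tne unfolding img by blast
    then show ?thesis using that unfolding img by blast
  qed
  have pos0: "0 < - (\<Sum>\<sigma>\<in>Sg. c \<sigma> * (\<Sum>j\<in>Nset J (\<iota> ` \<sigma>). fst j \<bullet> vnormal \<iota> \<sigma> \<tau>))"
  proof (rule strict_sum[where Pc="\<lambda>\<sigma>. \<iota> ` \<sigma>" and vv="\<lambda>\<sigma>. vnormal \<iota> \<sigma> \<tau>" and T="\<iota> ` \<tau>", OF finSg J cnn bal _ Tne _ _ _ _ \<sigma>s js])
    show "\<forall>\<sigma>\<in>Sg. \<iota> ` \<tau> \<subseteq> \<iota> ` \<sigma>" using Sg_facts by blast
    show "\<forall>\<sigma>\<in>Sg. \<forall>x\<in>\<iota> ` \<tau>. \<forall>y\<in>\<iota> ` \<sigma>. 0 \<le> (y - x) \<bullet> vnormal \<iota> \<sigma> \<tau>"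
      using VNs unfolding Phi_def by blast
    show "\<forall>\<sigma>\<in>Sg. \<forall>x\<in>\<iota> ` \<tau>. \<forall>y\<in>\<iota> ` \<sigma>. y - x - ((y - x) \<bullet> vnormal \<iota> \<sigma> \<tau>) *\<^sub>R vnormal \<iota> \<sigma> \<tau> \<in> direction (\<iota> ` \<tau>)"
      using VNs by blast
    show "\<forall>\<sigma>\<in>Sg. \<exists>y\<in>\<iota> ` \<sigma>. \<forall>x\<in>\<iota> ` \<tau>. 0 < (y - x) \<bullet> vnormal \<iota> \<sigma> \<tau>"
      using VNs by blast
    show "\<forall>\<sigma>\<in>Sg. \<forall>j\<in>J. (\<forall>y\<in>\<iota> ` \<sigma>. hf j y \<le> 0) \<or> (\<forall>y\<in>\<iota> ` \<sigma>. 0 \<le> hf j y)"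
      using cell_signs Sg_facts unfolding S_def by blast
  qed
  have lp: "lin_part \<iota> V (\<lambda>x. fP J (\<iota> x)) \<sigma> (vnormal \<iota> \<sigma> \<tau>) = (\<Sum>j\<in>Nset J (\<iota> ` \<sigma>). fst j \<bullet> vnormal \<iota> \<sigma> \<tau>)"
    if \<sigma>: "\<sigma> \<in> Sg" for \<sigma>
  proof -
    note F = Sg_facts[OF \<sigma>]
    have \<sigma>c: "\<sigma> \<in> cells \<iota> P J" using F S_def by blast
    have vd: "vnormal \<iota> \<sigma> \<tau> \<in> direction (\<iota> ` \<sigma>)" using VNs[OF \<sigma>] unfolding Phi_def by blast
    have "lin_part \<iota> V (\<lambda>x. fP J (\<iota> x)) \<sigma> (vnormal \<iota> \<sigma> \<tau>) = wv J \<alpha> \<beta> (\<iota> ` \<sigma>) \<bullet> vnormal \<iota> \<sigma> \<tau>"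
      using lin_part_val[OF ECS _ _ _ wvec[OF \<sigma>c] vd] F V by blast
    also have "\<dots> = (\<Sum>j\<in>Nset J (\<iota> ` \<sigma>). fst j \<bullet> vnormal \<iota> \<sigma> \<tau>)" using wvec_dir[OF \<sigma>c vd] .
    finally show ?thesis .
  qed
  have "wdot \<iota> (cells \<iota> P J) V (\<lambda>x. fP J (\<iota> x)) (k + 1) c \<tau>
      = - (\<Sum>\<sigma>\<in>Sg. c \<sigma> * (\<Sum>j\<in>Nset J (\<iota> ` \<sigma>). fst j \<bullet> vnormal \<iota> \<sigma> \<tau>))"
    unfolding wdot_def Sg_def[symmetric, unfolded S_def] using lp by (simp add: Sg_def S_def)
  then show "0 < wdot \<iota> (cells \<iota> P J) V (\<lambda>x. fP J (\<iota> x)) (k + 1) c \<tau>" using pos0 by simp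
qed

end


lemma hypo_convex:
  fixes \<alpha> :: "'v::euclidean_space"
  shows "convex {p. \<alpha> \<bullet> fst p = \<beta> \<and> snd p \<le> fP J (fst p)}"
  unfolding convex_def
proof (intro ballI allI impI)
  fix x y :: "'v \<times> real" and u v :: real
  assume x: "x \<in> {p. \<alpha> \<bullet> fst p = \<beta> \<and> snd p \<le> fP J (fst p)}"
    and y: "y \<in> {p. \<alpha> \<bullet> fst p = \<beta> \<and> snd p \<le> fP J (fst p)}"
    and uv0: "0 \<le> u" and uv1: "0 \<le> v" and uv2: "u + v = 1"
  note uv = uv0 uv1 uv2
  have u: "u = 1 - v" using uv by simp
  have "\<alpha> \<bullet> (u *\<^sub>R fst x + v *\<^sub>R fst y) = u * \<beta> + v * \<beta>"
    using x y by (simp add: inner_add_right)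
  then have a: "\<alpha> \<bullet> (u *\<^sub>R fst x + v *\<^sub>R fst y) = \<beta>" using uv by (simp add: distrib_right[symmetric])
  have "u * snd x + v * snd y \<le> u * fP J (fst x) + v * fP J (fst y)"
    using x y uv by (intro add_mono mult_left_mono) auto
  also have "\<dots> \<le> fP J (u *\<^sub>R fst x + v *\<^sub>R fst y)"
    unfolding u using fP_concave[of v J "fst x" "fst y"] uv by simp
  finally show "u *\<^sub>R x + v *\<^sub>R y \<in> {p. \<alpha> \<bullet> fst p = \<beta> \<and> snd p \<le> fP J (fst p)}"
    using a by simp
qed

theorem theorem4p22:
  fixes X :: "'a topology" and \<iota> :: "'a \<Rightarrow> 'v::euclidean_space"
    and H :: "'v set" and \<P> :: "'a set set" and U :: "'a set"
  assumes "euclidean_polyhedral_space X \<iota> H \<P>"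
    and "openin X U"
    and "finite (restr \<P> U)"
  shows "\<exists>f. pw_affine_on_space X \<iota> \<P> f \<and> strongly_concave X \<iota> H f \<and>
             finite (restr (S_complex \<iota> \<P> f) U) \<and>
             strictly_concave_on_complex X \<iota> (S_complex \<iota> \<P> f) U f \<and>
             euclidean_complex X \<iota> (S_complex \<iota> \<P> f) \<and>
             subdivides (S_complex \<iota> \<P> f) \<P> \<and>
             regular_on X \<iota> (S_complex \<iota> \<P> f) U"
proof -
  have sc: "hyperplane_off_origin H" and img: "\<iota> ` topspace X \<subseteq> H" and EC: "euclidean_complex X \<iota> \<P>"
    using assms(1) unfolding euclidean_polyhedral_space_def by blast+
  obtain \<alpha> \<beta> where ab: "\<alpha> \<noteq> 0" "\<beta> \<noteq> 0" "H = {y. \<alpha> \<bullet> y = \<beta>}"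
    using sc unfolding hyperplane_off_origin_def by blast
  have Hsub: "\<forall>x\<in>topspace X. \<alpha> \<bullet> \<iota> x = \<beta>"
  proof
    fix x assume "x \<in> topspace X"
    then have "\<iota> x \<in> H" using img by blast
    then show "\<alpha> \<bullet> \<iota> x = \<beta>" unfolding ab(3) by simp
  qed
  define J where "J = (\<Union>\<sigma>\<in>restr \<P> U. Crep (\<iota> ` \<sigma>))"
  have finJ: "finite J" unfolding J_def
  proof (intro finite_UN_I assms(3))
    fix \<sigma> assume "\<sigma> \<in> restr \<P> U"
    then have "\<sigma> \<in> \<P>" unfolding restr_def by blast
    then show "finite (Crep (\<iota> ` \<sigma>))" using Crep EC_poly[OF EC] by blast
  qed
  have CJ: "\<forall>\<sigma>\<in>restr \<P> U. Crep (\<iota> ` \<sigma>) \<subseteq> J" unfolding J_def by blast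
  have Seq: "S_complex \<iota> \<P> (\<lambda>x. fP J (\<iota> x)) = cells \<iota> \<P> J" by (rule S_eq_cells[OF EC finJ])
  have ECc: "euclidean_complex X \<iota> (cells \<iota> \<P> J)" by (rule EC_cells[OF EC finJ])
  have "restr (cells \<iota> \<P> J) U \<subseteq> (\<lambda>(\<sigma>, s). \<sigma> \<inter> \<iota> -` Kc J s) ` (restr \<P> U \<times> SV J)"
    unfolding restr_def cells_def by fastforce
  moreover have "finite ((\<lambda>(\<sigma>, s). \<sigma> \<inter> \<iota> -` Kc J s) ` (restr \<P> U \<times> SV J))"
    using assms(3) finite_SV[OF finJ] by blast
  ultimately have fin: "finite (restr (cells \<iota> \<P> J) U)" by (rule finite_subset)
  have strict: "strictly_concave_on_complex X \<iota> (cells \<iota> \<P> J) U (\<lambda>x. fP J (\<iota> x))"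
    by (rule strict_main[OF EC finJ Hsub ab(2) assms(2) CJ fin])
  have sub: "subdivides (cells \<iota> \<P> J) \<P>" unfolding subdivides_def cells_def by blast
  have subr: "subdivides (cells \<iota> \<P> J) (cells \<iota> \<P> J)" unfolding subdivides_def by blast
  have pwas: "pw_affine_on_space X \<iota> \<P> (\<lambda>x. fP J (\<iota> x))"
    unfolding pw_affine_on_space_def equivalent_complexes_def
    using ECc sub subr pwa[OF EC finJ Hsub ab(2)] by blast
  have hyp: "{(y, t::real). y \<in> H \<and> ereal t \<le> ereal (fP J y)} = {p. \<alpha> \<bullet> fst p = \<beta> \<and> snd p \<le> fP J (fst p)}"
    unfolding ab(3) by (rule set_eqI) (auto simp: case_prod_beta)
  have sconc: "strongly_concave X \<iota> H (\<lambda>x. fP J (\<iota> x))"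
    unfolding strongly_concave_def
    by (rule exI[of _ "\<lambda>y. ereal (fP J y)"]) (simp only: hyp hypo_convex, simp)
  have reg: "regular_on X \<iota> (cells \<iota> \<P> J) U" unfolding regular_on_def using strict by blast
  show ?thesis
    by (rule exI[of _ "\<lambda>x. fP J (\<iota> x)"]) (unfold Seq, use pwas sconc fin strict ECc sub reg in blast)
qed

end
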